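(* Let $(X_t)_{t\ge0}$ be a continuous-time Markov chain on a finite state space $\Sigma$ with mixing time $T$ and invariant distribution $\pi$, and let $h:\Sigma\to\mathbb R$ with $\mathrm{Var}_\pi(h)\le\sigma^2$ and $\pi(h)>0$. Then for every $t>0$ and every $\delta$ with $$0<\delta\le\frac{\sigma^2}{2\pi(h)\|h\|_\infty}\wedge1,$$ one has $$\mathbb P\Big[\int_0^th(X_s)\,ds-t\pi(h)\ge\delta t\pi(h)\Big]\le4\exp\Big\{-\Big\lfloor\frac t{k'(\delta)T}-1\Big\rfloor\frac{\delta^2\pi(h)^2}{6\sigma^2}\Big\},$$ where $k'(\delta)=-\log_2\big(\delta^2\pi(h)^2\pi_\star/(6\sigma^2)\big)$ and $\pi_\star=\min_x\pi(x)$.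
   Context: The mixing time of a continuous-time chain with generator $L$ is $T=\inf\{t\ge0:\max_{x}\|e^{tL}(x,\cdot)-\pi\|_{TV}\le1/4\}$. $\pi(h)=\sum_x\pi(x)h(x)$, $\mathrm{Var}_\pi h=\pi((h-\pi(h))^2)$, $\|h\|_\infty=\max_x|h(x)|$. *)

theory Defs
  imports "HOL-Probability.Probability"
begin

definition is_generator :: "('a::finite \<Rightarrow> 'a \<Rightarrow> real) \<Rightarrow> bool" where
  "is_generator L \<longleftrightarrow> (\<forall>x y. x \<noteq> y \<longrightarrow> 0 \<le> L x y) \<and> (\<forall>x. (\<Sum>y\<in>UNIV. L x y) = 0)"

fun mat_pow :: "('a::finite \<Rightarrow> 'a \<Rightarrow> real) \<Rightarrow> nat \<Rightarrow> 'a \<Rightarrow> 'a \<Rightarrow> real" where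
  "mat_pow L 0 = (\<lambda>x y. if x = y then 1 else 0)"
| "mat_pow L (Suc n) = (\<lambda>x y. \<Sum>z\<in>UNIV. mat_pow L n x z * L z y)"

definition heat :: "('a::finite \<Rightarrow> 'a \<Rightarrow> real) \<Rightarrow> real \<Rightarrow> 'a \<Rightarrow> 'a \<Rightarrow> real" where
  "heat L t x y = (\<Sum>n. t ^ n / fact n * mat_pow L n x y)"

definition is_distribution :: "('a::finite \<Rightarrow> real) \<Rightarrow> bool" where
  "is_distribution p \<longleftrightarrow> (\<forall>x. 0 \<le> p x) \<and> (\<Sum>x\<in>UNIV. p x) = 1"

definition is_invariant :: "('a::finite \<Rightarrow> 'a \<Rightarrow> real) \<Rightarrow> ('a \<Rightarrow> real) \<Rightarrow> bool" where
  "is_invariant L \<pi> \<longleftrightarrow> is_distribution \<pi> \<and> (\<forall>y. (\<Sum>x\<in>UNIV. \<pi> x * L x y) = 0)"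

definition tv_dist :: "('a::finite \<Rightarrow> real) \<Rightarrow> ('a \<Rightarrow> real) \<Rightarrow> real" where
  "tv_dist p q = (\<Sum>x\<in>UNIV. \<bar>p x - q x\<bar>) / 2"

definition mixing_set :: "('a::finite \<Rightarrow> 'a \<Rightarrow> real) \<Rightarrow> ('a \<Rightarrow> real) \<Rightarrow> real set" where
  "mixing_set L \<pi> = {t. 0 \<le> t \<and> (MAX x. tv_dist (heat L t x) \<pi>) \<le> 1/4}"

definition mixing_time :: "('a::finite \<Rightarrow> 'a \<Rightarrow> real) \<Rightarrow> ('a \<Rightarrow> real) \<Rightarrow> real" where
  "mixing_time L \<pi> = Inf (mixing_set L \<pi>)"

definition pi_mean :: "('a::finite \<Rightarrow> real) \<Rightarrow> ('a \<Rightarrow> real) \<Rightarrow> real" where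
  "pi_mean \<pi> h = (\<Sum>x\<in>UNIV. \<pi> x * h x)"

definition pi_var :: "('a::finite \<Rightarrow> real) \<Rightarrow> ('a \<Rightarrow> real) \<Rightarrow> real" where
  "pi_var \<pi> h = pi_mean \<pi> (\<lambda>x. (h x - pi_mean \<pi> h)^2)"

definition sup_norm :: "('a::finite \<Rightarrow> real) \<Rightarrow> real" where
  "sup_norm h = (MAX x. \<bar>h x\<bar>)"

definition pi_min :: "('a::finite \<Rightarrow> real) \<Rightarrow> real" where
  "pi_min \<pi> = (MIN x. \<pi> x)"

text \<open>X is a continuous-time Markov chain on M with generator L (any initial law):
  each X t is a random variable, paths are right-continuous (hence piecewise constant,
  since the state space is discrete), and the Markov property holds with transition
  function heat L.\<close>
definition is_ctmc :: "'w measure \<Rightarrow> (real \<Rightarrow> 'w \<Rightarrow> 'a::finite) \<Rightarrow> ('a \<Rightarrow> 'a \<Rightarrow> real) \<Rightarrow> bool" where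
  "is_ctmc M X L \<longleftrightarrow>
     prob_space M \<and> is_generator L \<and>
     (\<forall>t\<ge>0. X t \<in> measurable M (count_space UNIV)) \<and>
     (\<forall>\<omega>\<in>space M. \<forall>s\<ge>0. \<exists>\<epsilon>>0. \<forall>u. s \<le> u \<and> u < s + \<epsilon> \<longrightarrow> X u \<omega> = X s \<omega>) \<and>
     (\<forall>(F::real set) (z::real \<Rightarrow> 'a) s r x y.
        finite F \<longrightarrow> (\<forall>u\<in>F. 0 \<le> u \<and> u \<le> s) \<longrightarrow> 0 \<le> r \<longrightarrow>
        measure M {\<omega>\<in>space M. (\<forall>u\<in>F. X u \<omega> = z u) \<and> X s \<omega> = x \<and> X (s + r) \<omega> = y}
        = measure M {\<omega>\<in>space M. (\<forall>u\<in>F. X u \<omega> = z u) \<and> X s \<omega> = x} * heat L r x y)"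

end

theory Submission
  imports Defs
begin


lemma mat_pow_bound:
  fixes L :: "'a::finite \<Rightarrow> 'a \<Rightarrow> real"
  shows "\<bar>mat_pow L n x y\<bar> \<le> (\<Sum>z\<in>UNIV. \<Sum>w\<in>UNIV. \<bar>L z w\<bar>) ^ n"
proof (induction n arbitrary: y)
  case 0 then show ?case by simp
next
  case (Suc n)
  define C where "C = (\<Sum>z\<in>UNIV. \<Sum>w\<in>UNIV. \<bar>L z w\<bar>)"
  have C0: "0 \<le> C" unfolding C_def by (intro sum_nonneg) auto
  have "\<bar>mat_pow L (Suc n) x y\<bar> \<le> (\<Sum>z\<in>UNIV. \<bar>mat_pow L n x z\<bar> * \<bar>L z y\<bar>)"
    by (simp add: abs_mult[symmetric] sum_abs)
  also have "\<dots> \<le> (\<Sum>z\<in>UNIV. C ^ n * \<bar>L z y\<bar>)"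
    by (intro sum_mono mult_right_mono) (auto simp: Suc[unfolded C_def[symmetric]])
  also have "\<dots> = C ^ n * (\<Sum>z\<in>UNIV. \<bar>L z y\<bar>)" by (simp add: sum_distrib_left)
  also have "(\<Sum>z\<in>UNIV. \<bar>L z y\<bar>) \<le> C" unfolding C_def
    by (intro sum_mono) (rule member_le_sum, auto)
  hence "C ^ n * (\<Sum>z\<in>UNIV. \<bar>L z y\<bar>) \<le> C ^ n * C" using C0 by (intro mult_left_mono) auto
  finally show ?case by (simp add: C_def mult.commute)
qed

lemma heat_summable:
  fixes L :: "'a::finite \<Rightarrow> 'a \<Rightarrow> real"
  shows "summable (\<lambda>n. t ^ n / fact n * mat_pow L n x y)"
proof -
  define C where "C = (\<Sum>z\<in>UNIV. \<Sum>w\<in>UNIV. \<bar>L z w\<bar>)"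
  have S: "summable (\<lambda>n. inverse (fact n) * (\<bar>t\<bar> * C) ^ n)" by (rule summable_exp)
  have B: "norm (t ^ n / fact n * mat_pow L n x y) \<le> inverse (fact n) * (\<bar>t\<bar> * C) ^ n" for n
  proof -
    have "norm (t ^ n / fact n * mat_pow L n x y) = \<bar>t\<bar>^n / fact n * \<bar>mat_pow L n x y\<bar>"
      by (simp add: abs_mult power_abs)
    also have "\<dots> \<le> \<bar>t\<bar>^n / fact n * C ^ n"
      unfolding C_def by (intro mult_left_mono mat_pow_bound) simp
    also have "\<dots> = inverse (fact n) * (\<bar>t\<bar> * C) ^ n"
      by (simp add: power_mult_distrib divide_inverse)
    finally show ?thesis .
  qed
  show ?thesis
    by (rule summable_comparison_test[OF _ S]) (use B in blast)
qed

lemma mat_pow_1: "mat_pow L (Suc 0) = L"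
proof (intro ext)
  fix x y
  have "mat_pow L (Suc 0) x y = (\<Sum>z\<in>UNIV. (if x = z then 1 else 0) * L z y)"
    by simp
  also have "\<dots> = (\<Sum>z\<in>UNIV. (if x = z then L z y else 0))"
    by (rule sum.cong) auto
  finally show "mat_pow L (Suc 0) x y = L x y" by simp
qed

lemma mat_pow_Suc_app: "mat_pow L (Suc m) x y = (\<Sum>z\<in>UNIV. mat_pow L m x z * L z y)"
  by simp

lemma pi_mat_pow:
  fixes L :: "'a::finite \<Rightarrow> 'a \<Rightarrow> real"
  assumes inv: "is_invariant L \<pi>"
  shows "(\<Sum>x\<in>UNIV. \<pi> x * mat_pow L (Suc n) x y) = 0"
proof (induction n arbitrary: y)
  case 0
  then show ?case using inv by (simp only: mat_pow_1) (simp add: is_invariant_def)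
next
  case (Suc n)
  have "(\<Sum>x\<in>UNIV. \<pi> x * mat_pow L (Suc (Suc n)) x y)
      = (\<Sum>z\<in>UNIV. (\<Sum>x\<in>UNIV. \<pi> x * mat_pow L (Suc n) x z) * L z y)"
  proof -
    have "(\<Sum>x\<in>UNIV. \<pi> x * mat_pow L (Suc (Suc n)) x y)
        = (\<Sum>x\<in>UNIV. \<Sum>z\<in>UNIV. \<pi> x * mat_pow L (Suc n) x z * L z y)"
      by (simp only: mat_pow_Suc_app[of L "Suc n"] sum_distrib_left mult.assoc)
    also have "\<dots> = (\<Sum>z\<in>UNIV. \<Sum>x\<in>UNIV. \<pi> x * mat_pow L (Suc n) x z * L z y)"
      by (rule sum.swap)
    also have "\<dots> = (\<Sum>z\<in>UNIV. (\<Sum>x\<in>UNIV. \<pi> x * mat_pow L (Suc n) x z) * L z y)"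
      by (simp only: sum_distrib_right)
    finally show ?thesis .
  qed
  also have "\<dots> = 0" using Suc by simp
  finally show ?case .
qed

lemma pi_heat:
  fixes L :: "'a::finite \<Rightarrow> 'a \<Rightarrow> real"
  assumes inv: "is_invariant L \<pi>"
  shows "(\<Sum>x\<in>UNIV. \<pi> x * heat L t x y) = \<pi> y"
proof -
  have "(\<lambda>n. \<Sum>x\<in>UNIV. \<pi> x * (t ^ n / fact n * mat_pow L n x y)) sums
        (\<Sum>x\<in>UNIV. \<pi> x * heat L t x y)"
    unfolding heat_def
    by (intro sums_sum sums_mult summable_sums heat_summable)
  moreover have "(\<lambda>n. \<Sum>x\<in>UNIV. \<pi> x * (t ^ n / fact n * mat_pow L n x y))
      = (\<lambda>n. if n = 0 then \<pi> y else 0)"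
  proof
    fix n show "(\<Sum>x\<in>UNIV. \<pi> x * (t ^ n / fact n * mat_pow L n x y)) = (if n = 0 then \<pi> y else 0)"
    proof (cases n)
      case 0 then show ?thesis by (simp add: if_distrib cong: if_cong)
    next
      case (Suc k)
      have "(\<Sum>x\<in>UNIV. \<pi> x * (t ^ n / fact n * mat_pow L n x y))
          = t ^ n / fact n * (\<Sum>x\<in>UNIV. \<pi> x * mat_pow L n x y)"
        by (simp add: sum_distrib_left mult_ac)
      then show ?thesis using pi_mat_pow[OF inv, of k y] Suc by simp
    qed
  qed
  ultimately have "(\<lambda>n. if n = 0 then \<pi> y else 0) sums (\<Sum>x\<in>UNIV. \<pi> x * heat L t x y)" by simp
  moreover have "(\<lambda>n. if n = 0 then \<pi> y else 0) sums \<pi> y" by (rule sums_single)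
  ultimately show ?thesis using sums_unique2 by blast
qed



lemma sum_pos_neg_half:
  fixes g :: "'a::finite \<Rightarrow> real"
  assumes "(\<Sum>y\<in>UNIV. g y) = 0"
  shows "(\<Sum>y\<in>UNIV. max (g y) 0) = (\<Sum>y\<in>UNIV. \<bar>g y\<bar>) / 2"
proof -
  have a: "g y = max (g y) 0 - max (- g y) 0" for y by auto
  have b: "\<bar>g y\<bar> = max (g y) 0 + max (- g y) 0" for y by auto
  have "(\<Sum>y\<in>UNIV. max (g y) 0) - (\<Sum>y\<in>UNIV. max (- g y) 0) = 0"
    using assms by (subst (asm) a) (simp add: sum_subtractf)
  moreover have "(\<Sum>y\<in>UNIV. \<bar>g y\<bar>) = (\<Sum>y\<in>UNIV. max (g y) 0) + (\<Sum>y\<in>UNIV. max (- g y) 0)"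
    by (subst b) (simp add: sum.distrib)
  ultimately show ?thesis by simp
qed

lemma tv_bound_fun:
  fixes g f :: "'a::finite \<Rightarrow> real"
  assumes g0: "(\<Sum>y\<in>UNIV. g y) = 0" and f0: "\<And>y. 0 \<le> f y" and fF: "\<And>y. f y \<le> F"
  shows "(\<Sum>y\<in>UNIV. g y * f y) \<le> (\<Sum>y\<in>UNIV. \<bar>g y\<bar>) / 2 * F"
proof -
  have "(\<Sum>y\<in>UNIV. g y * f y) \<le> (\<Sum>y\<in>UNIV. max (g y) 0 * F)"
  proof (intro sum_mono)
    fix y
    show "g y * f y \<le> max (g y) 0 * F"
    proof (cases "g y \<ge> 0")
      case True then show ?thesis using fF[of y] by (simp add: mult_left_mono)
    next
      case False
      then have "g y * f y \<le> 0" using f0[of y] by (simp add: mult_nonpos_nonneg)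
      moreover have "0 \<le> F" using f0[of y] fF[of y] by linarith
      ultimately show ?thesis using False by (simp add: max_def)
    qed
  qed
  also have "\<dots> = (\<Sum>y\<in>UNIV. \<bar>g y\<bar>) / 2 * F"
    using sum_pos_neg_half[OF g0] by (simp add: sum_distrib_right[symmetric])
  finally show ?thesis .
qed

lemma tv_contract:
  fixes g :: "'a::finite \<Rightarrow> real" and R :: "'a \<Rightarrow> 'b::finite \<Rightarrow> real"
  assumes g0: "(\<Sum>v\<in>UNIV. g v) = 0"
    and D: "\<And>v v'. (\<Sum>y\<in>UNIV. \<bar>R v y - R v' y\<bar>) \<le> D"
  shows "(\<Sum>y\<in>UNIV. \<bar>\<Sum>v\<in>UNIV. g v * R v y\<bar>) \<le> (\<Sum>v\<in>UNIV. \<bar>g v\<bar>) / 2 * D"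
proof -
  define s where "s y = sgn (\<Sum>v\<in>UNIV. g v * R v y)" for y
  define Fv where "Fv v = (\<Sum>y\<in>UNIV. s y * R v y)" for v
  define c where "c = Min (range Fv)"
  have c_le: "c \<le> Fv v" for v unfolding c_def by (rule Min_le) auto
  have "Min (range Fv) \<in> range Fv" by (intro Min_in) auto
  then obtain v0 where v0: "c = Fv v0" unfolding c_def by (metis imageE)
  have s_abs: "\<bar>s y\<bar> \<le> 1" for y unfolding s_def by (simp add: abs_sgn_eq)
  have diff: "Fv v - c \<le> D" for v
  proof -
    have "Fv v - c = (\<Sum>y\<in>UNIV. s y * (R v y - R v0 y))"
      unfolding v0 Fv_def by (simp add: sum_subtractf right_diff_distrib)
    also have "\<dots> \<le> (\<Sum>y\<in>UNIV. \<bar>R v y - R v0 y\<bar>)"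
    proof (intro sum_mono)
      fix y
      have "s y * (R v y - R v0 y) \<le> \<bar>s y * (R v y - R v0 y)\<bar>" by simp
      also have "\<dots> \<le> 1 * \<bar>R v y - R v0 y\<bar>" unfolding abs_mult
        by (intro mult_right_mono s_abs) simp
      finally show "s y * (R v y - R v0 y) \<le> \<bar>R v y - R v0 y\<bar>" by simp
    qed
    also have "\<dots> \<le> D" by (rule D)
    finally show ?thesis .
  qed
  have "(\<Sum>y\<in>UNIV. \<bar>\<Sum>v\<in>UNIV. g v * R v y\<bar>) = (\<Sum>y\<in>UNIV. s y * (\<Sum>v\<in>UNIV. g v * R v y))"
    unfolding s_def by (intro sum.cong refl) (auto simp: sgn_if)
  also have "\<dots> = (\<Sum>v\<in>UNIV. g v * Fv v)"
  proof -
    have "(\<Sum>y\<in>UNIV. s y * (\<Sum>v\<in>UNIV. g v * R v y)) = (\<Sum>y\<in>UNIV. \<Sum>v\<in>UNIV. g v * (s y * R v y))"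
      by (simp add: sum_distrib_left mult_ac)
    also have "\<dots> = (\<Sum>v\<in>UNIV. \<Sum>y\<in>UNIV. g v * (s y * R v y))" by (rule sum.swap)
    also have "\<dots> = (\<Sum>v\<in>UNIV. g v * Fv v)" unfolding Fv_def by (simp add: sum_distrib_left)
    finally show ?thesis .
  qed
  also have "\<dots> = (\<Sum>v\<in>UNIV. g v * (Fv v - c))"
    using g0 by (simp add: right_diff_distrib sum_subtractf sum_distrib_right[symmetric])
  also have "\<dots> \<le> (\<Sum>v\<in>UNIV. \<bar>g v\<bar>) / 2 * D"
    by (rule tv_bound_fun[OF g0]) (use c_le diff in auto)
  finally show ?thesis .
qed



lemma ctmc_prob_space: "is_ctmc M X L \<Longrightarrow> prob_space M"
  by (simp add: is_ctmc_def)

lemma ctmc_gen: "is_ctmc M X L \<Longrightarrow> is_generator L"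
  by (simp add: is_ctmc_def)

lemma ctmc_X_meas: "is_ctmc M X L \<Longrightarrow> 0 \<le> t \<Longrightarrow> X t \<in> measurable M (count_space UNIV)"
  by (simp add: is_ctmc_def)

lemma ctmc_rc: "is_ctmc M X L \<Longrightarrow> \<omega> \<in> space M \<Longrightarrow> 0 \<le> s \<Longrightarrow>
    \<exists>\<epsilon>>0. \<forall>u. s \<le> u \<and> u < s + \<epsilon> \<longrightarrow> X u \<omega> = X s \<omega>"
  unfolding is_ctmc_def by blast

lemma ctmc_markov:
  assumes "is_ctmc M X L" "finite F" "\<forall>u\<in>F. 0 \<le> u \<and> u \<le> s" "0 \<le> r"
  shows "measure M {\<omega>\<in>space M. (\<forall>u\<in>F. X u \<omega> = z u) \<and> X s \<omega> = x \<and> X (s + r) \<omega> = y}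
        = measure M {\<omega>\<in>space M. (\<forall>u\<in>F. X u \<omega> = z u) \<and> X s \<omega> = x} * heat L r x y"
  using assms unfolding is_ctmc_def by blast

lemma ctmc_ev_sets:
  assumes "is_ctmc M X L" "0 \<le> t"
  shows "{\<omega>\<in>space M. X t \<omega> = x} \<in> sets M"
proof -
  have "X t -` {x} \<inter> space M \<in> sets M"
    by (rule measurable_sets[OF ctmc_X_meas[OF assms]]) simp
  moreover have "X t -` {x} \<inter> space M = {\<omega>\<in>space M. X t \<omega> = x}" by auto
  ultimately show ?thesis by simp
qed

lemma ctmc_evs_sets:
  assumes "is_ctmc M X L" "finite F" "\<forall>u\<in>F. 0 \<le> u"
  shows "{\<omega>\<in>space M. \<forall>u\<in>F. X u \<omega> = z u} \<in> sets M"
  using assms(2)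
  by (intro sets.sets_Collect_finite_All ctmc_ev_sets[OF assms(1)]) (use assms(3) in auto)

lemma sum_measure_partition:
  fixes Y :: "'w \<Rightarrow> 'a::finite"
  assumes fm: "finite_measure M" and S: "\<And>y. {\<omega>\<in>space M. P \<omega> \<and> Y \<omega> = y} \<in> sets M"
  shows "(\<Sum>y\<in>UNIV. measure M {\<omega>\<in>space M. P \<omega> \<and> Y \<omega> = y}) = measure M {\<omega>\<in>space M. P \<omega>}"
proof -
  define A where "A y = {\<omega>\<in>space M. P \<omega> \<and> Y \<omega> = y}" for y
  have "measure M (\<Union>y\<in>UNIV. A y) = (\<Sum>y\<in>UNIV. measure M (A y))"
    by (rule finite_measure.finite_measure_finite_Union[OF fm])
       (auto simp: A_def S disjoint_family_on_def)
  moreover have "(\<Union>y\<in>UNIV. A y) = {\<omega>\<in>space M. P \<omega>}" by (auto simp: A_def)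
  ultimately show ?thesis by (simp add: A_def)
qed

lemma two_time:
  assumes c: "is_ctmc M X L" and s: "0 \<le> s" and r: "0 \<le> r"
  shows "measure M {\<omega>\<in>space M. X s \<omega> = x \<and> X (s + r) \<omega> = y} = measure M {\<omega>\<in>space M. X s \<omega> = x} * heat L r x y"
proof -
  have "measure M {\<omega>\<in>space M. (\<forall>u\<in>{}. X u \<omega> = z u) \<and> X s \<omega> = x \<and> X (s + r) \<omega> = y}
      = measure M {\<omega>\<in>space M. (\<forall>u\<in>{}. X u \<omega> = z u) \<and> X s \<omega> = x} * heat L r x y"
    by (rule ctmc_markov[OF c]) (use r in auto)
  then show ?thesis by simp
qed

lemma reach_nonneg:
  assumes c: "is_ctmc M X L" and s: "0 \<le> s" and r: "0 \<le> r"
    and p: "measure M {\<omega>\<in>space M. X s \<omega> = x} > 0"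
  shows "0 \<le> heat L r x y"
proof -
  have "0 \<le> measure M {\<omega>\<in>space M. X s \<omega> = x \<and> X (s + r) \<omega> = y}" by (rule measure_nonneg)
  then have "0 \<le> measure M {\<omega>\<in>space M. X s \<omega> = x} * heat L r x y"
    by (simp only: two_time[OF c s r])
  then show ?thesis using p by (simp add: zero_le_mult_iff)
qed

lemma reach_rowsum:
  assumes c: "is_ctmc M X L" and s: "0 \<le> s" and r: "0 \<le> r"
    and p: "measure M {\<omega>\<in>space M. X s \<omega> = x} > 0"
  shows "(\<Sum>y\<in>UNIV. heat L r x y) = 1"
proof -
  have fm: "finite_measure M" using ctmc_prob_space[OF c] by (simp add: prob_space_def)
  have "(\<Sum>y\<in>UNIV. measure M {\<omega>\<in>space M. X s \<omega> = x \<and> X (s + r) \<omega> = y}) = measure M {\<omega>\<in>space M. X s \<omega> = x}"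
    by (rule sum_measure_partition[OF fm])
       (intro sets.sets_Collect_conj ctmc_ev_sets[OF c]; use s r in simp)
  then have "measure M {\<omega>\<in>space M. X s \<omega> = x} * (\<Sum>y\<in>UNIV. heat L r x y) = measure M {\<omega>\<in>space M. X s \<omega> = x}"
    by (simp add: two_time[OF c s r] sum_distrib_left)
  then show ?thesis using p by simp
qed

lemma reach_CK:
  assumes c: "is_ctmc M X L" and s: "0 \<le> s" and r1: "0 \<le> r1" and r2: "0 \<le> r2"
    and p: "measure M {\<omega>\<in>space M. X s \<omega> = x} > 0"
  shows "heat L (r1 + r2) x y = (\<Sum>v\<in>UNIV. heat L r1 x v * heat L r2 v y)"
proof -
  have fm: "finite_measure M" using ctmc_prob_space[OF c] by (simp add: prob_space_def)
  have eq1: "measure M {\<omega>\<in>space M. (X s \<omega> = x \<and> X (s + (r1 + r2)) \<omega> = y) \<and> X (s + r1) \<omega> = v}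
      = measure M {\<omega>\<in>space M. X s \<omega> = x} * heat L r1 x v * heat L r2 v y" for v
  proof -
    have "measure M {\<omega>\<in>space M. (\<forall>u\<in>{s}. X u \<omega> = (\<lambda>_. x) u) \<and> X (s + r1) \<omega> = v \<and> X (s + r1 + r2) \<omega> = y}
        = measure M {\<omega>\<in>space M. (\<forall>u\<in>{s}. X u \<omega> = (\<lambda>_. x) u) \<and> X (s + r1) \<omega> = v} * heat L r2 v y"
      by (rule ctmc_markov[OF c]) (use s r1 r2 in auto)
    moreover have "{\<omega>\<in>space M. (\<forall>u\<in>{s}. X u \<omega> = (\<lambda>_. x) u) \<and> X (s + r1) \<omega> = v \<and> X (s + r1 + r2) \<omega> = y}
        = {\<omega>\<in>space M. (X s \<omega> = x \<and> X (s + (r1 + r2)) \<omega> = y) \<and> X (s + r1) \<omega> = v}"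
      by (auto simp: add.assoc)
    moreover have "{\<omega>\<in>space M. (\<forall>u\<in>{s}. X u \<omega> = (\<lambda>_. x) u) \<and> X (s + r1) \<omega> = v}
        = {\<omega>\<in>space M. X s \<omega> = x \<and> X (s + r1) \<omega> = v}"
      by auto
    moreover have "measure M {\<omega>\<in>space M. X s \<omega> = x \<and> X (s + r1) \<omega> = v}
       = measure M {\<omega>\<in>space M. X s \<omega> = x} * heat L r1 x v" by (rule two_time[OF c s r1])
    ultimately show ?thesis by simp
  qed
  have e1: "(\<Sum>v\<in>UNIV. measure M {\<omega>\<in>space M. (X s \<omega> = x \<and> X (s + (r1 + r2)) \<omega> = y) \<and> X (s + r1) \<omega> = v})
      = measure M {\<omega>\<in>space M. X s \<omega> = x \<and> X (s + (r1 + r2)) \<omega> = y}"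
    by (rule sum_measure_partition[OF fm])
       (intro sets.sets_Collect_conj ctmc_ev_sets[OF c]; use s r1 r2 in simp)
  have e2: "(\<Sum>v\<in>UNIV. measure M {\<omega>\<in>space M. (X s \<omega> = x \<and> X (s + (r1 + r2)) \<omega> = y) \<and> X (s + r1) \<omega> = v})
      = measure M {\<omega>\<in>space M. X s \<omega> = x} * (\<Sum>v\<in>UNIV. heat L r1 x v * heat L r2 v y)"
    by (simp only: eq1 sum_distrib_left mult.assoc)
  have e3: "measure M {\<omega>\<in>space M. X s \<omega> = x \<and> X (s + (r1 + r2)) \<omega> = y}
      = measure M {\<omega>\<in>space M. X s \<omega> = x} * heat L (r1 + r2) x y"
    by (rule two_time[OF c s]) (use r1 r2 in simp)
  have "measure M {\<omega>\<in>space M. X s \<omega> = x} * (\<Sum>v\<in>UNIV. heat L r1 x v * heat L r2 v y)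
      = measure M {\<omega>\<in>space M. X s \<omega> = x} * heat L (r1 + r2) x y"
    using e1 e2 e3 by argo
  then show ?thesis using p by simp
qed

lemma reach_step:
  assumes c: "is_ctmc M X L" and s: "0 \<le> s" and r: "0 \<le> r"
    and p: "measure M {\<omega>\<in>space M. X s \<omega> = x} > 0" and h: "heat L r x w > 0"
  shows "measure M {\<omega>\<in>space M. X (s + r) \<omega> = w} > 0"
proof -
  have fm: "finite_measure M" using ctmc_prob_space[OF c] by (simp add: prob_space_def)
  have "measure M {\<omega>\<in>space M. X s \<omega> = x \<and> X (s + r) \<omega> = w} \<le> measure M {\<omega>\<in>space M. X (s + r) \<omega> = w}"
    by (rule finite_measure.finite_measure_mono[OF fm]) (auto intro: ctmc_ev_sets[OF c] simp: s r)
  moreover have "measure M {\<omega>\<in>space M. X s \<omega> = x \<and> X (s + r) \<omega> = w} > 0"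
    using two_time[OF c s r, of x w] p h by simp
  ultimately show ?thesis by linarith
qed



lemma mixing_set_tv:
  assumes "T1 \<in> mixing_set L \<pi>"
  shows "0 \<le> T1" "(\<Sum>y\<in>UNIV. \<bar>heat L T1 v y - \<pi> y\<bar>) \<le> 1/2"
proof -
  show "0 \<le> T1" using assms by (simp add: mixing_set_def)
  have "tv_dist (heat L T1 v) \<pi> \<le> (MAX x. tv_dist (heat L T1 x) \<pi>)" by (rule Max_ge) auto
  also have "\<dots> \<le> 1/4" using assms by (simp add: mixing_set_def)
  finally show "(\<Sum>y\<in>UNIV. \<bar>heat L T1 v y - \<pi> y\<bar>) \<le> 1/2" by (simp add: tv_dist_def)
qed

lemma mix_decay:
  assumes c: "is_ctmc M X L" and inv: "is_invariant L \<pi>" and T1: "T1 \<in> mixing_set L \<pi>"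
    and k: "1 \<le> k"
  shows "\<And>s w. 0 \<le> s \<Longrightarrow> measure M {\<omega>\<in>space M. X s \<omega> = w} > 0 \<Longrightarrow>
    (\<Sum>y\<in>UNIV. \<bar>heat L (real k * T1) w y - \<pi> y\<bar>) \<le> (1/2)^k"
  using k
proof (induction k rule: nat_induct_at_least)
  case base
  then show ?case using mixing_set_tv(2)[OF T1] by simp
next
  case (Suc k s w)
  have T0: "0 \<le> T1" using mixing_set_tv(1)[OF T1] .
  have sumpi: "(\<Sum>v\<in>UNIV. \<pi> v) = 1" using inv by (simp add: is_invariant_def is_distribution_def)
  define g where "g v = heat L (real k * T1) w v - \<pi> v" for v
  have g0: "(\<Sum>v\<in>UNIV. g v) = 0"
    using reach_rowsum[OF c Suc.prems(1) _ Suc.prems(2), of "real k * T1"] T0 sumpi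
    by (simp add: g_def sum_subtractf)
  have eq: "heat L (real (Suc k) * T1) w y - \<pi> y = (\<Sum>v\<in>UNIV. g v * heat L T1 v y)" for y
  proof -
    have "heat L (real (Suc k) * T1) w y = heat L (real k * T1 + T1) w y" by (simp add: algebra_simps)
    also have "\<dots> = (\<Sum>v\<in>UNIV. heat L (real k * T1) w v * heat L T1 v y)"
      by (rule reach_CK[OF c Suc.prems(1) _ T0 Suc.prems(2)]) (use T0 in simp)
    finally show ?thesis
      using pi_heat[OF inv, of T1 y] by (simp add: g_def left_diff_distrib sum_subtractf)
  qed
  have D: "(\<Sum>y\<in>UNIV. \<bar>heat L T1 v y - heat L T1 v' y\<bar>) \<le> 1" for v v'
  proof -
    have "(\<Sum>y\<in>UNIV. \<bar>heat L T1 v y - heat L T1 v' y\<bar>)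
        \<le> (\<Sum>y\<in>UNIV. \<bar>heat L T1 v y - \<pi> y\<bar> + \<bar>heat L T1 v' y - \<pi> y\<bar>)"
      by (intro sum_mono) linarith
    also have "\<dots> \<le> 1/2 + 1/2" unfolding sum.distrib
      by (intro add_mono mixing_set_tv(2)[OF T1])
    finally show ?thesis by simp
  qed
  have "(\<Sum>y\<in>UNIV. \<bar>heat L (real (Suc k) * T1) w y - \<pi> y\<bar>) = (\<Sum>y\<in>UNIV. \<bar>\<Sum>v\<in>UNIV. g v * heat L T1 v y\<bar>)"
    by (simp only: eq)
  also have "\<dots> \<le> (\<Sum>v\<in>UNIV. \<bar>g v\<bar>) / 2 * 1" by (rule tv_contract[OF g0 D])
  also have "\<dots> \<le> (1/2)^k / 2" using Suc.IH[OF Suc.prems] by (simp add: g_def)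
  finally show ?case by simp
qed

lemma step_bound:
  assumes c: "is_ctmc M X L" and inv: "is_invariant L \<pi>" and T1: "T1 \<in> mixing_set L \<pi>"
    and l: "1 \<le> l" and lb: "real l * T1 \<le> b" and s: "0 \<le> s"
    and p: "measure M {\<omega>\<in>space M. X s \<omega> = z} > 0"
    and f0: "\<And>y. 0 \<le> f y" and fF: "\<And>y. f y \<le> F"
  shows "(\<Sum>y\<in>UNIV. heat L b z y * f y) \<le> (\<Sum>y\<in>UNIV. \<pi> y * f y) + (1/2)^(l+1) * F"
proof -
  have T0: "0 \<le> T1" using mixing_set_tv(1)[OF T1] .
  define r where "r = b - real l * T1"
  have r0: "0 \<le> r" using lb by (simp add: r_def)
  have lT0: "0 \<le> real l * T1" using T0 by simp
  have sumpi: "(\<Sum>v\<in>UNIV. \<pi> v) = 1" using inv by (simp add: is_invariant_def is_distribution_def)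
  have hb: "heat L b z y = (\<Sum>w\<in>UNIV. heat L r z w * heat L (real l * T1) w y)" for y
  proof -
    have "heat L b z y = heat L (r + real l * T1) z y" by (simp add: r_def)
    also have "\<dots> = (\<Sum>w\<in>UNIV. heat L r z w * heat L (real l * T1) w y)"
      by (rule reach_CK[OF c s r0 lT0 p])
    finally show ?thesis .
  qed
  define I where "I w = (\<Sum>y\<in>UNIV. (heat L (real l * T1) w y - \<pi> y) * f y)" for w
  have rs: "(\<Sum>w\<in>UNIV. heat L r z w) = 1" by (rule reach_rowsum[OF c s r0 p])
  have "(\<Sum>y\<in>UNIV. heat L b z y * f y) = (\<Sum>y\<in>UNIV. \<Sum>w\<in>UNIV. heat L r z w * (heat L (real l * T1) w y * f y))"
    by (simp only: hb sum_distrib_right mult.assoc)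
  also have "\<dots> = (\<Sum>w\<in>UNIV. \<Sum>y\<in>UNIV. heat L r z w * (heat L (real l * T1) w y * f y))"
    by (rule sum.swap)
  also have "\<dots> = (\<Sum>w\<in>UNIV. heat L r z w * I w) + (\<Sum>w\<in>UNIV. heat L r z w) * (\<Sum>y\<in>UNIV. \<pi> y * f y)"
  proof -
    have "(\<Sum>y\<in>UNIV. heat L (real l * T1) w y * f y) = I w + (\<Sum>y\<in>UNIV. \<pi> y * f y)" for w
      by (simp add: I_def left_diff_distrib sum_subtractf)
    then have "(\<Sum>w\<in>UNIV. \<Sum>y\<in>UNIV. heat L r z w * (heat L (real l * T1) w y * f y))
        = (\<Sum>w\<in>UNIV. heat L r z w * (I w + (\<Sum>y\<in>UNIV. \<pi> y * f y)))"
      by (simp add: sum_distrib_left[symmetric])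
    also have "\<dots> = (\<Sum>w\<in>UNIV. heat L r z w * I w) + (\<Sum>w\<in>UNIV. heat L r z w) * (\<Sum>y\<in>UNIV. \<pi> y * f y)"
      by (simp add: distrib_left sum.distrib sum_distrib_right)
    finally show ?thesis .
  qed
  also have "\<dots> = (\<Sum>w\<in>UNIV. heat L r z w * I w) + (\<Sum>y\<in>UNIV. \<pi> y * f y)"
    using rs by simp
  also have "(\<Sum>w\<in>UNIV. heat L r z w * I w) \<le> (\<Sum>w\<in>UNIV. heat L r z w * ((1/2)^(l+1) * F))"
  proof (intro sum_mono)
    fix w
    have hnn: "0 \<le> heat L r z w" by (rule reach_nonneg[OF c s r0 p])
    show "heat L r z w * I w \<le> heat L r z w * ((1/2)^(l+1) * F)"
    proof (cases "heat L r z w = 0")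
      case True then show ?thesis by simp
    next
      case False
      then have pos: "heat L r z w > 0" using hnn by simp
      have pw: "measure M {\<omega>\<in>space M. X (s + r) \<omega> = w} > 0"
        by (rule reach_step[OF c s r0 p pos])
      have sr: "0 \<le> s + r" using s r0 by simp
      have g0: "(\<Sum>y\<in>UNIV. heat L (real l * T1) w y - \<pi> y) = 0"
        using reach_rowsum[OF c sr lT0 pw] sumpi by (simp add: sum_subtractf)
      have "I w \<le> (\<Sum>y\<in>UNIV. \<bar>heat L (real l * T1) w y - \<pi> y\<bar>) / 2 * F"
        unfolding I_def by (rule tv_bound_fun[OF g0 f0 fF])
      also have "\<dots> \<le> (1/2)^l / 2 * F"
      proof (intro mult_right_mono divide_right_mono)
        show "(\<Sum>y\<in>UNIV. \<bar>heat L (real l * T1) w y - \<pi> y\<bar>) \<le> (1/2)^l"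
          by (rule mix_decay[OF c inv T1 l sr pw])
        show "0 \<le> F" using f0[of undefined] fF[of undefined] by linarith
      qed simp
      finally show ?thesis using hnn by (intro mult_left_mono) (simp_all add: field_simps)
    qed
  qed
  also have "\<dots> = (\<Sum>w\<in>UNIV. heat L r z w) * ((1/2)^(l+1) * F)"
    by (rule sum_distrib_right[symmetric])
  also have "\<dots> = (1/2)^(l+1) * F" using rs by simp
  finally show ?thesis by simp
qed



definition pth :: "'w measure \<Rightarrow> (real \<Rightarrow> 'w \<Rightarrow> 'a) \<Rightarrow> real set \<Rightarrow> (real \<Rightarrow> 'a) \<Rightarrow> real" where
  "pth M X G z = measure M {\<omega>\<in>space M. \<forall>u\<in>G. X u \<omega> = z u}"

lemma path_expect:
  fixes \<phi> :: "'a::finite \<Rightarrow> real"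
  assumes c: "is_ctmc M X L" and fin: "finite G" and G0: "\<forall>u\<in>G. 0 \<le> u"
  shows "(\<integral>\<omega>. (\<Prod>u\<in>G. \<phi> (X u \<omega>)) \<partial>M)
       = (\<Sum>z\<in>PiE G (\<lambda>_. UNIV). pth M X G z * (\<Prod>u\<in>G. \<phi> (z u)))"
proof -
  interpret prob_space M by (rule ctmc_prob_space[OF c])
  define A where "A z = {\<omega>\<in>space M. \<forall>u\<in>G. X u \<omega> = z u}" for z
  have As: "A z \<in> sets M" for z unfolding A_def by (rule ctmc_evs_sets[OF c fin G0])
  have pw: "(\<Prod>u\<in>G. \<phi> (X u \<omega>)) = (\<Sum>z\<in>PiE G (\<lambda>_. UNIV). indicator (A z) \<omega> * (\<Prod>u\<in>G. \<phi> (z u)))"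
    if \<omega>: "\<omega> \<in> space M" for \<omega>
  proof -
    define z0 where "z0 = restrict (\<lambda>u. X u \<omega>) G"
    have z0P: "z0 \<in> PiE G (\<lambda>_. UNIV)" unfolding z0_def by simp
    have ind: "indicator (A z) \<omega> = (if z = z0 then 1 else (0::real))" if z: "z \<in> PiE G (\<lambda>_. UNIV)" for z
    proof -
      have "(\<forall>u\<in>G. X u \<omega> = z u) \<longleftrightarrow> z = z0"
      proof
        assume "\<forall>u\<in>G. X u \<omega> = z u"
        then show "z = z0" using z unfolding z0_def by (auto simp: fun_eq_iff PiE_def extensional_def)
      next
        assume "z = z0" then show "\<forall>u\<in>G. X u \<omega> = z u" unfolding z0_def by simp
      qed
      then show ?thesis using \<omega> unfolding A_def indicator_def by auto
    qed
    have "(\<Sum>z\<in>PiE G (\<lambda>_. UNIV). indicator (A z) \<omega> * (\<Prod>u\<in>G. \<phi> (z u)))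
        = (\<Sum>z\<in>PiE G (\<lambda>_. UNIV). (if z = z0 then (\<Prod>u\<in>G. \<phi> (z u)) else 0))"
      by (intro sum.cong refl) (simp add: ind)
    also have "\<dots> = (\<Prod>u\<in>G. \<phi> (z0 u))" using z0P fin by (simp add: finite_PiE)
    also have "\<dots> = (\<Prod>u\<in>G. \<phi> (X u \<omega>))" unfolding z0_def by (intro prod.cong) auto
    finally show ?thesis by simp
  qed
  have "(\<integral>\<omega>. (\<Prod>u\<in>G. \<phi> (X u \<omega>)) \<partial>M)
      = (\<integral>\<omega>. (\<Sum>z\<in>PiE G (\<lambda>_. UNIV). indicator (A z) \<omega> * (\<Prod>u\<in>G. \<phi> (z u))) \<partial>M)"
    by (rule Bochner_Integration.integral_cong[OF refl]) (rule pw)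
  also have "\<dots> = (\<Sum>z\<in>PiE G (\<lambda>_. UNIV). (\<integral>\<omega>. indicator (A z) \<omega> * (\<Prod>u\<in>G. \<phi> (z u)) \<partial>M))"
    by (rule Bochner_Integration.integral_sum[where f="\<lambda>z \<omega>. indicator (A z) \<omega> * (\<Prod>u\<in>G. \<phi> (z u))"])
       (use As in \<open>auto simp: emeasure_eq_measure\<close>)
  also have "\<dots> = (\<Sum>z\<in>PiE G (\<lambda>_. UNIV). pth M X G z * (\<Prod>u\<in>G. \<phi> (z u)))"
  proof (intro sum.cong refl)
    fix z
    have "A z \<inter> space M = A z" unfolding A_def by auto
    then show "(\<integral>\<omega>. indicator (A z) \<omega> * (\<Prod>u\<in>G. \<phi> (z u)) \<partial>M) = pth M X G z * (\<Prod>u\<in>G. \<phi> (z u))"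
      by (simp add: pth_def A_def)
  qed
  finally show ?thesis .
qed

lemma path_total:
  assumes c: "is_ctmc M X L" and fin: "finite G" and G0: "\<forall>u\<in>G. 0 \<le> u"
  shows "(\<Sum>z\<in>PiE G (\<lambda>_. UNIV :: 'a::finite set). pth M X G z) = 1"
proof -
  interpret prob_space M by (rule ctmc_prob_space[OF c])
  have "(\<integral>\<omega>. (\<Prod>u\<in>G. (\<lambda>_::'a. 1::real) (X u \<omega>)) \<partial>M)
       = (\<Sum>z\<in>PiE G (\<lambda>_. UNIV). pth M X G z * (\<Prod>u\<in>G. (\<lambda>_::'a. 1::real) (z u)))"
    by (rule path_expect[OF c fin G0])
  then show ?thesis by (simp add: prob_space)
qed

lemma pth_nonneg: "0 \<le> pth M X G z" by (simp add: pth_def)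



lemma sum_PiE_insert:
  fixes H :: "(real \<Rightarrow> 'a::finite) \<Rightarrow> real"
  assumes "a \<notin> G" "finite G"
  shows "(\<Sum>z\<in>PiE (insert a G) (\<lambda>_. UNIV). H z) = (\<Sum>g\<in>PiE G (\<lambda>_. UNIV). \<Sum>y\<in>UNIV. H (g(a := y)))"
proof -
  have "(\<Sum>z\<in>PiE (insert a G) (\<lambda>_. UNIV). H z)
      = (\<Sum>z\<in>(\<lambda>(y, g). g(a := y)) ` (UNIV \<times> PiE G (\<lambda>_. UNIV)). H z)"
    by (simp add: PiE_insert_eq)
  also have "\<dots> = (\<Sum>p\<in>UNIV \<times> PiE G (\<lambda>_. UNIV). H ((\<lambda>(y, g). g(a := y)) p))"
    using sum.reindex[OF inj_combinator[OF assms(1)], of H "\<lambda>_. UNIV"] by (simp add: comp_def)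
  also have "\<dots> = (\<Sum>(y, g)\<in>UNIV \<times> PiE G (\<lambda>_. UNIV). H (g(a := y)))"
    by (simp add: case_prod_unfold)
  also have "\<dots> = (\<Sum>y\<in>UNIV. \<Sum>g\<in>PiE G (\<lambda>_. UNIV). H (g(a := y)))"
    by (rule sum.cartesian_product[symmetric])
  also have "\<dots> = (\<Sum>g\<in>PiE G (\<lambda>_. UNIV). \<Sum>y\<in>UNIV. H (g(a := y)))"
    by (rule sum.swap)
  finally show ?thesis .
qed

lemma skeleton_bound:
  fixes f :: "'a::finite \<Rightarrow> real"
  assumes c: "is_ctmc M X L" and s0: "0 \<le> s" and b0: "0 < b"
    and f0: "\<And>y. 0 \<le> f y" and fF: "\<And>y. f y \<le> F" and rho0: "0 \<le> \<rho>"
    and step: "\<And>s' x. 0 \<le> s' \<Longrightarrow> measure M {\<omega>\<in>space M. X s' \<omega> = x} > 0 \<Longrightarrow>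
        (\<Sum>y\<in>UNIV. heat L b x y * f y) \<le> \<rho>"
    and k: "1 \<le> k"
  shows "(\<Sum>z\<in>PiE ((\<lambda>j. s + real j * b) ` {..<k}) (\<lambda>_. UNIV).
            pth M X ((\<lambda>j. s + real j * b) ` {..<k}) z * (\<Prod>u\<in>(\<lambda>j. s + real j * b) ` {..<k}. f (z u)))
         \<le> F * \<rho> ^ (k - 1)"
  using k
proof (induction k rule: nat_induct_at_least)
  case base
  have G1: "(\<lambda>j. s + real j * b) ` {..<1} = {s}" by auto
  have "(\<Sum>z\<in>PiE {s} (\<lambda>_. UNIV). pth M X {s} z * (\<Prod>u\<in>{s}. f (z u)))
      \<le> (\<Sum>z\<in>PiE {s} (\<lambda>_. UNIV :: 'a set). pth M X {s} z * F)"
    by (intro sum_mono mult_left_mono) (auto simp: fF pth_nonneg)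
  also have "\<dots> = F" using path_total[OF c, of "{s}"] s0 by (simp add: sum_distrib_right[symmetric])
  finally show ?case unfolding G1 by simp
next
  case (Suc k)
  define G where "G = (\<lambda>j. s + real j * b) ` {..<k}"
  define a where "a = s + real k * b"
  define l where "l = s + real (k - 1) * b"
  have finG: "finite G" unfolding G_def by simp
  have G0: "\<forall>u\<in>G. 0 \<le> u" unfolding G_def using s0 b0 by auto
  have aG: "a \<notin> G" unfolding G_def a_def using b0 by auto
  have lG: "l \<in> G" unfolding G_def l_def using Suc.hyps by (intro image_eqI[of _ _ "k - 1"]) auto
  have al: "a = l + b" unfolding a_def l_def using Suc.hyps by (simp add: of_nat_diff algebra_simps)
  have Gle: "\<forall>u\<in>G - {l}. 0 \<le> u \<and> u \<le> l"
    unfolding G_def l_def using s0 b0 by (auto intro!: mult_right_mono)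
  have l0: "0 \<le> l" using G0 lG by auto
  have GS: "(\<lambda>j. s + real j * b) ` {..<Suc k} = insert a G"
    unfolding G_def a_def by (auto simp: lessThan_Suc)
  have pth_ins: "pth M X (insert a G) (g(a := y)) = pth M X G g * heat L b (g l) y" for g y
  proof -
    have "{\<omega>\<in>space M. \<forall>u\<in>insert a G. X u \<omega> = (g(a := y)) u}
        = {\<omega>\<in>space M. (\<forall>u\<in>G - {l}. X u \<omega> = g u) \<and> X l \<omega> = g l \<and> X (l + b) \<omega> = y}"
    proof -
      have "(\<forall>u\<in>insert a G. X u \<omega> = (g(a := y)) u) \<longleftrightarrow> X a \<omega> = y \<and> (\<forall>u\<in>G. X u \<omega> = g u)" for \<omega>
      proof -
        have "\<forall>u\<in>G. (g(a := y)) u = g u" using aG by auto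
        then show ?thesis by simp
      qed
      moreover have "(\<forall>u\<in>G. X u \<omega> = g u) \<longleftrightarrow> (\<forall>u\<in>G - {l}. X u \<omega> = g u) \<and> X l \<omega> = g l" for \<omega>
        using lG by blast
      ultimately show ?thesis unfolding al by blast
    qed
    moreover have "{\<omega>\<in>space M. \<forall>u\<in>G. X u \<omega> = g u}
        = {\<omega>\<in>space M. (\<forall>u\<in>G - {l}. X u \<omega> = g u) \<and> X l \<omega> = g l}"
      using lG by auto
    ultimately show ?thesis unfolding pth_def
      using ctmc_markov[OF c _ Gle, of b g "g l" y] finG b0 by simp
  qed
  have prod_ins: "(\<Prod>u\<in>insert a G. f ((g(a := y)) u)) = f y * (\<Prod>u\<in>G. f (g u))" for g y
  proof -
    have "(\<Prod>u\<in>insert a G. f ((g(a := y)) u)) = f y * (\<Prod>u\<in>G. f ((g(a := y)) u))"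
      using aG finG by simp
    also have "(\<Prod>u\<in>G. f ((g(a := y)) u)) = (\<Prod>u\<in>G. f (g u))"
      using aG by (intro prod.cong) auto
    finally show ?thesis .
  qed
  have "(\<Sum>z\<in>PiE (insert a G) (\<lambda>_. UNIV). pth M X (insert a G) z * (\<Prod>u\<in>insert a G. f (z u)))
      = (\<Sum>g\<in>PiE G (\<lambda>_. UNIV). \<Sum>y\<in>UNIV. pth M X (insert a G) (g(a := y)) * (\<Prod>u\<in>insert a G. f ((g(a := y)) u)))"
    by (rule sum_PiE_insert[OF aG finG])
  also have "\<dots> = (\<Sum>g\<in>PiE G (\<lambda>_. UNIV). (pth M X G g * (\<Prod>u\<in>G. f (g u))) * (\<Sum>y\<in>UNIV. heat L b (g l) y * f y))"
  proof (intro sum.cong refl)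
    fix g :: "real \<Rightarrow> 'a"
    show "(\<Sum>y\<in>UNIV. pth M X (insert a G) (g(a := y)) * (\<Prod>u\<in>insert a G. f ((g(a := y)) u)))
        = (pth M X G g * (\<Prod>u\<in>G. f (g u))) * (\<Sum>y\<in>UNIV. heat L b (g l) y * f y)"
      by (simp only: pth_ins prod_ins) (simp add: sum_distrib_left mult_ac)
  qed
  also have "\<dots> \<le> (\<Sum>g\<in>PiE G (\<lambda>_. UNIV). (pth M X G g * (\<Prod>u\<in>G. f (g u))) * \<rho>)"
  proof (intro sum_mono)
    fix g :: "real \<Rightarrow> 'a"
    assume g: "g \<in> PiE G (\<lambda>_. UNIV)"
    have nn: "0 \<le> pth M X G g * (\<Prod>u\<in>G. f (g u))"
      by (intro mult_nonneg_nonneg pth_nonneg prod_nonneg) (simp add: f0)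
    show "(pth M X G g * (\<Prod>u\<in>G. f (g u))) * (\<Sum>y\<in>UNIV. heat L b (g l) y * f y)
        \<le> (pth M X G g * (\<Prod>u\<in>G. f (g u))) * \<rho>"
    proof (cases "pth M X G g = 0")
      case True then show ?thesis by simp
    next
      case False
      then have pp: "pth M X G g > 0" using pth_nonneg[of M X G g] by simp
      have fm: "finite_measure M" using ctmc_prob_space[OF c] by (simp add: prob_space_def)
      have "pth M X G g \<le> measure M {\<omega>\<in>space M. X l \<omega> = g l}"
        unfolding pth_def
        by (rule finite_measure.finite_measure_mono[OF fm]) (use lG l0 in \<open>auto intro: ctmc_ev_sets[OF c]\<close>)
      then have "measure M {\<omega>\<in>space M. X l \<omega> = g l} > 0" using pp by linarith
      then show ?thesis using step[OF l0] nn by (intro mult_left_mono) auto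
    qed
  qed
  also have "\<dots> = \<rho> * (\<Sum>g\<in>PiE G (\<lambda>_. UNIV). pth M X G g * (\<Prod>u\<in>G. f (g u)))"
    by (simp add: sum_distrib_left mult_ac)
  also have "\<dots> \<le> \<rho> * (F * \<rho> ^ (k - 1))"
    using Suc.IH unfolding G_def by (intro mult_left_mono rho0)
  also have "\<dots> = F * \<rho> ^ (Suc k - 1)"
    using Suc.hyps by (cases k) (auto simp: mult_ac)
  finally show ?case unfolding GS .
qed



lemma exp_quad_neg:
  fixes x :: real assumes "x \<le> 0"
  shows "exp x \<le> 1 + x + x^2 / 2"
proof -
  let ?g = "\<lambda>x::real. 1 + x + x^2 / 2 - exp x"
  have "?g 0 \<le> ?g x"
  proof (rule DERIV_nonpos_imp_nonincreasing[OF assms])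
    fix y :: real assume "x \<le> y" "y \<le> 0"
    show "\<exists>d. DERIV ?g y :> d \<and> d \<le> 0"
      by (intro exI conjI derivative_eq_intros refl) (use exp_ge_add_one_self[of y] in auto)
  qed
  then show ?thesis by simp
qed

lemma exp_quad_bound:
  fixes x c :: real assumes "x \<le> c" "0 \<le> c"
  shows "exp x \<le> 1 + x + x^2 / 2 * exp c"
proof (cases "x \<le> 0")
  case True
  have "x^2 / 2 \<le> x^2 / 2 * exp c" using assms(2) by (simp add: mult_le_cancel_left1)
  then show ?thesis using exp_quad_neg[OF True] by linarith
next
  case False
  obtain t where t: "\<bar>t\<bar> \<le> \<bar>x\<bar>" "exp x = (\<Sum>m<2. x ^ m / fact m) + exp t / fact 2 * x ^ 2"
    using Maclaurin_exp_le[of x 2] by blast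
  have "exp t \<le> exp c" using t(1) False assms(1) by simp
  then have le: "exp t / 2 * x ^ 2 \<le> x ^ 2 / 2 * exp c"
    by (simp add: mult.commute mult_right_mono)
  have "exp x = 1 + x + exp t / 2 * x ^ 2" using t(2) by (simp add: numeral_2_eq_2 lessThan_Suc)
  then show ?thesis using le by linarith
qed

lemma pi_mgf:
  fixes \<pi> h :: "'a::finite \<Rightarrow> real"
  assumes dist: "is_distribution \<pi>" and V: "pi_var \<pi> h \<le> V"
    and c0: "0 \<le> c" and bd: "\<And>x. \<mu> * (h x - pi_mean \<pi> h) \<le> c"
  shows "(\<Sum>x\<in>UNIV. \<pi> x * exp (\<mu> * (h x - pi_mean \<pi> h))) \<le> 1 + \<mu>^2 * V / 2 * exp c"
proof -
  define m where "m = pi_mean \<pi> h"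
  have p0: "\<And>x. 0 \<le> \<pi> x" and p1: "(\<Sum>x\<in>UNIV. \<pi> x) = 1" using dist by (auto simp: is_distribution_def)
  have "(\<Sum>x\<in>UNIV. \<pi> x * exp (\<mu> * (h x - m)))
      \<le> (\<Sum>x\<in>UNIV. \<pi> x * (1 + \<mu> * (h x - m) + (\<mu> * (h x - m))^2 / 2 * exp c))"
    by (intro sum_mono mult_left_mono exp_quad_bound p0 c0 bd[unfolded m_def[symmetric]])
  also have "\<dots> = (\<Sum>x\<in>UNIV. \<pi> x) + \<mu> * ((\<Sum>x\<in>UNIV. \<pi> x * h x) - m * (\<Sum>x\<in>UNIV. \<pi> x))
      + \<mu>^2 / 2 * exp c * (\<Sum>x\<in>UNIV. \<pi> x * (h x - m)^2)"
  proof -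
    have "(\<Sum>x\<in>UNIV. \<pi> x * (1 + \<mu> * (h x - m) + (\<mu> * (h x - m))^2 / 2 * exp c))
        = (\<Sum>x\<in>UNIV. \<pi> x + \<mu> * (\<pi> x * h x - m * \<pi> x) + \<mu>^2 / 2 * exp c * (\<pi> x * (h x - m)^2))"
      by (intro sum.cong refl) (simp only: power_mult_distrib, simp add: algebra_simps)
    also have "\<dots> = (\<Sum>x\<in>UNIV. \<pi> x) + \<mu> * ((\<Sum>x\<in>UNIV. \<pi> x * h x) - m * (\<Sum>x\<in>UNIV. \<pi> x))
      + \<mu>^2 / 2 * exp c * (\<Sum>x\<in>UNIV. \<pi> x * (h x - m)^2)"
    proof -
      have "(\<Sum>x\<in>UNIV. \<mu> * (\<pi> x * h x - m * \<pi> x)) = \<mu> * ((\<Sum>x\<in>UNIV. \<pi> x * h x) - m * (\<Sum>x\<in>UNIV. \<pi> x))"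
        by (simp add: sum_distrib_left[symmetric] sum_subtractf)
      moreover have "(\<Sum>x\<in>UNIV. \<mu>^2 / 2 * exp c * (\<pi> x * (h x - m)^2)) = \<mu>^2 / 2 * exp c * (\<Sum>x\<in>UNIV. \<pi> x * (h x - m)^2)"
        by (rule sum_distrib_left[symmetric])
      ultimately show ?thesis by (simp add: sum.distrib)
    qed
    finally show ?thesis .
  qed
  also have "(\<Sum>x\<in>UNIV. \<pi> x * h x) = m" by (simp add: m_def pi_mean_def)
  also have "(\<Sum>x\<in>UNIV. \<pi> x * (h x - m)^2) = pi_var \<pi> h" by (simp add: pi_var_def pi_mean_def m_def)
  also have "\<mu>^2 / 2 * exp c * pi_var \<pi> h \<le> \<mu>^2 / 2 * exp c * V"
    by (intro mult_left_mono V) auto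
  finally show ?thesis using p1 by (simp add: m_def mult_ac)
qed

lemma one_plus_pow_le_exp:
  fixes x :: real assumes "0 \<le> x"
  shows "(1 + x) ^ k \<le> exp (real k * x)"
proof -
  have "(1 + x) ^ k \<le> exp x ^ k" using assms by (intro power_mono) auto
  also have "\<dots> = exp (real k * x)" by (simp add: exp_of_nat_mult)
  finally show ?thesis .
qed

lemma final_arith:
  fixes a :: real and n :: nat
  assumes a0: "0 \<le> a" and n: "1 \<le> n"
  shows "exp (- (12/5) * a * real n) * (5/4 * (1 + 49/40 * a) ^ (n - 1)) \<le> 4 * exp (- (real n - 1) * a)"
proof -
  have "(1 + 49/40 * a) ^ (n - 1) \<le> exp (real (n - 1) * (49/40 * a))"
    using a0 by (intro one_plus_pow_le_exp) simp
  then have "exp (- (12/5) * a * real n) * (5/4 * (1 + 49/40 * a) ^ (n - 1))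
      \<le> exp (- (12/5) * a * real n) * (5/4 * exp (real (n - 1) * (49/40 * a)))"
    by (intro mult_left_mono) auto
  also have "\<dots> = 5/4 * exp (- (12/5) * a * real n + real (n - 1) * (49/40 * a))"
    by (simp only: exp_add mult_ac)
  also have "\<dots> \<le> 4 * exp (- (real n - 1) * a)"
  proof (intro mult_mono)
    have "real (n - 1) = real n - 1" using n by (simp add: of_nat_diff)
    then show "exp (- (12/5) * a * real n + real (n - 1) * (49/40 * a)) \<le> exp (- (real n - 1) * a)"
      using a0 n by (simp add: algebra_simps)
  qed auto
  finally show ?thesis .
qed

lemma exp_fifth: "exp (1/5 :: real) \<le> 5/4"
proof -
  have "1 + (-1/5) \<le> exp (-1/5 :: real)" by (rule exp_ge_add_one_self)
  then have "4/5 \<le> exp (-1/5::real)" by simp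
  then have "inverse (exp (-1/5::real)) \<le> inverse (4/5)" by (intro le_imp_inverse_le) auto
  then show ?thesis by (simp add: exp_minus[symmetric])
qed



lemma ceil_step:
  fixes t s :: real and N k :: nat
  assumes t: "0 < t" and N: "0 < N" and s1: "real k * t / real N < s" and s2: "s \<le> (real k + 1) * t / N"
  shows "\<lceil>s * real N / t\<rceil> = int k + 1"
proof -
  have "real k < s * real N / t" using s1 t N by (simp add: field_simps)
  moreover have "s * real N / t \<le> real k + 1" using s2 t N by (simp add: field_simps)
  ultimately show ?thesis by (simp add: ceiling_eq_iff)
qed

lemma step_fn_integral:
  fixes \<phi> :: "real \<Rightarrow> real" and t :: real and N :: nat
  assumes t: "0 < t" and N: "0 < N"
  shows "((\<lambda>s. \<phi> (t / real N * \<lceil>s * real N / t\<rceil>)) has_integral (\<Sum>i<k. t / real N * \<phi> (t / real N * (real i + 1))))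
          {0..real k * t / real N}"
proof (induction k)
  case 0
  then show ?case using has_integral_refl(2)[of "\<lambda>s. \<phi> (t / real N * \<lceil>s * real N / t\<rceil>)" 0] by simp
next
  case (Suc k)
  let ?g = "\<lambda>s::real. \<phi> (t / real N * \<lceil>s * real N / t\<rceil>)"
  let ?c = "\<phi> (t / real N * (real k + 1))"
  let ?a = "real k * t / real N" and ?b = "real (Suc k) * t / real N"
  have le1: "0 \<le> ?a" using t N by simp
  have le2: "?a \<le> ?b" using t N by (simp add: divide_right_mono)
  have ba: "?b - ?a = t / real N" by (simp add: algebra_simps add_divide_distrib)
  have I1: "((\<lambda>s. ?c) has_integral (t / real N * ?c)) {?a..?b}"
    using has_integral_const_real[of ?c ?a ?b] le2 ba by simp
  have I2: "(?g has_integral (t / real N * ?c)) {?a..?b}"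
  proof (rule has_integral_spike_finite[OF _ _ I1])
    show "finite {?a}" by simp
    fix s assume s: "s \<in> {?a..?b} - {?a}"
    then have "\<lceil>s * real N / t\<rceil> = int k + 1"
      by (intro ceil_step[OF t N]) (auto simp: algebra_simps)
    then show "?g s = ?c" by simp
  qed
  from has_integral_combine[OF le1 le2 Suc.IH I2]
  show ?case by (simp add: add.commute)
qed

lemma riemann_conv:
  fixes \<phi> :: "real \<Rightarrow> real" and t B :: real and N :: "nat \<Rightarrow> nat"
  assumes t: "0 < t"
    and rc: "\<And>s. 0 \<le> s \<Longrightarrow> \<exists>\<epsilon>>0. \<forall>u. s \<le> u \<and> u < s + \<epsilon> \<longrightarrow> \<phi> u = \<phi> s"
    and bd: "\<And>s. \<bar>\<phi> s\<bar> \<le> B"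
    and Nlim: "filterlim N at_top sequentially" and Npos: "\<And>K. 0 < N K"
  shows "\<phi> integrable_on {0..t}"
    "(\<lambda>K. \<Sum>i<N K. t / real (N K) * \<phi> (t / real (N K) * (real i + 1))) \<longlonglongrightarrow> integral {0..t} \<phi>"
proof -
  define g where "g K s = \<phi> (t / real (N K) * \<lceil>s * real (N K) / t\<rceil>)" for K s
  have gI: "(g K has_integral (\<Sum>i<N K. t / real (N K) * \<phi> (t / real (N K) * (real i + 1)))) {0..t}" for K
    using step_fn_integral[OF t Npos[of K], of \<phi> "N K"] Npos[of K] unfolding g_def by simp
  have conv: "(\<lambda>K. g K s) \<longlonglongrightarrow> \<phi> s" if s: "s \<in> {0..t}" for s
  proof -
    have s0: "0 \<le> s" using s by simp
    obtain \<epsilon> where e: "\<epsilon> > 0" "\<forall>u. s \<le> u \<and> u < s + \<epsilon> \<longrightarrow> \<phi> u = \<phi> s"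
      using rc[OF s0] by blast
    have "\<forall>\<^sub>F K in sequentially. nat \<lceil>t / \<epsilon>\<rceil> + 1 \<le> N K"
      using Nlim by (simp add: filterlim_at_top)
    then have "\<forall>\<^sub>F K in sequentially. g K s = \<phi> s"
    proof (rule eventually_mono)
      fix K assume K: "nat \<lceil>t / \<epsilon>\<rceil> + 1 \<le> N K"
      have NK: "0 < real (N K)" using Npos[of K] by simp
      have "t / \<epsilon> < real (N K)"
      proof -
        have "t / \<epsilon> \<le> real (nat \<lceil>t / \<epsilon>\<rceil>)" by linarith
        also have "\<dots> < real (N K)" using K by linarith
        finally show ?thesis .
      qed
      then have tN: "t / real (N K) < \<epsilon>" using e(1) NK by (simp add: field_simps)
      define x where "x = s * real (N K) / t"
      have x1: "x \<le> \<lceil>x\<rceil>" using ceiling_correct[of x] by linarith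
      have x2: "\<lceil>x\<rceil> < x + 1" using ceiling_correct[of x] by linarith
      have sx: "s = t / real (N K) * x" unfolding x_def using t NK by simp
      have tn0: "0 < t / real (N K)" using t NK by simp
      have u1: "s \<le> t / real (N K) * \<lceil>x\<rceil>" unfolding sx using x1 tn0 by (intro mult_left_mono) auto
      have "t / real (N K) * \<lceil>x\<rceil> < t / real (N K) * (x + 1)" using x2 tn0 by (intro mult_strict_left_mono) auto
      then have u2: "t / real (N K) * \<lceil>x\<rceil> < s + \<epsilon>" using sx tN by (simp add: distrib_left)
      have "\<phi> (t / real (N K) * \<lceil>x\<rceil>) = \<phi> s" by (rule e(2)[rule_format]) (use u1 u2 in blast)
      then show "g K s = \<phi> s" unfolding g_def x_def .
    qed
    then show ?thesis by (rule tendsto_eventually)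
  qed
  have p1: "g K integrable_on {0..t}" for K using gI by blast
  have p2: "(\<lambda>_. B) integrable_on {0..t}" by (rule integrable_const_ivl)
  have p3: "norm (g K s) \<le> B" if "s \<in> {0..t}" for K s unfolding g_def using bd by simp
  have p4: "(\<lambda>K. g K s) \<longlonglongrightarrow> \<phi> s" if "s \<in> {0..t}" for s by (rule conv[OF that])
  show "\<phi> integrable_on {0..t}" by (rule dominated_convergence(1)[OF p1 p2 p3 p4])
  have "(\<lambda>K. integral {0..t} (g K)) \<longlonglongrightarrow> integral {0..t} \<phi>"
    by (rule dominated_convergence(2)[OF p1 p2 p3 p4])
  show "(\<lambda>K. \<Sum>i<N K. t / real (N K) * \<phi> (t / real (N K) * (real i + 1))) \<longlonglongrightarrow> integral {0..t} \<phi>"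
  proof -
    have "integral {0..t} (g K) = (\<Sum>i<N K. t / real (N K) * \<phi> (t / real (N K) * (real i + 1)))" for K
      by (rule integral_unique[OF gI])
    with \<open>(\<lambda>K. integral {0..t} (g K)) \<longlonglongrightarrow> integral {0..t} \<phi>\<close> show ?thesis by simp
  qed
qed



lemma sum_shift_block:
  fixes g :: "nat \<Rightarrow> real"
  shows "sum g {j * k..<j * k + k} = (\<Sum>i<k. g (j * k + i))"
proof -
  have "sum g {0 + j * k..<k + j * k} = (\<Sum>i = 0..<k. g (i + j * k))"
    by (rule sum.shift_bounds_nat_ivl)
  then show ?thesis by (simp add: lessThan_atLeast0 add.commute)
qed

lemma sum_regroup:
  fixes g :: "nat \<Rightarrow> real"
  shows "(\<Sum>i<n * k. g i) = (\<Sum>j<n. \<Sum>i<k. g (j * k + i))"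
proof -
  have "(\<Sum>i<n * k. g i) = (\<Sum>j<n. sum g {j * k..<j * k + k})"
    by (rule sum.nat_group[symmetric])
  also have "\<dots> = (\<Sum>j<n. \<Sum>i<k. g (j * k + i))"
    by (simp only: sum_shift_block)
  finally show ?thesis .
qed

lemma h_X_meas:
  assumes c: "is_ctmc M X L" and u: "0 \<le> u"
  shows "(\<lambda>\<omega>. h (X u \<omega>) :: real) \<in> borel_measurable M"
  using measurable_compose[OF ctmc_X_meas[OF c u], of h borel] by simp



lemma core_bound:
  fixes M :: "'w measure" and X :: "real \<Rightarrow> 'w \<Rightarrow> 'a::finite" and L :: "'a \<Rightarrow> 'a \<Rightarrow> real"
    and \<pi> h :: "'a \<Rightarrow> real" and t \<delta> \<mu> a H m T1 :: real and n l :: nat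
  assumes c: "is_ctmc M X L" and inv: "is_invariant L \<pi>" and T1: "T1 \<in> mixing_set L \<pi>"
    and l: "1 \<le> l" and n: "1 \<le> n" and t: "0 < t"
    and lb: "real l * T1 \<le> t / real n"
    and mu: "0 < \<mu>" and m: "m = pi_mean \<pi> h"
    and bdmu: "\<And>x. \<mu> * (h x - m) \<le> 1/5"
    and H: "\<And>x. \<bar>h x\<bar> \<le> H"
    and a0: "0 \<le> a"
    and rho: "(\<Sum>y\<in>UNIV. \<pi> y * exp (\<mu> * (h y - m))) + (1/2)^(l+1) * (5/4) \<le> 1 + 49/40 * a"
    and mud: "\<mu> * \<delta> * m = 12/5 * a"
  shows "measure M {\<omega>\<in>space M. integral {0..t} (\<lambda>s. h (X s \<omega>)) - t * m \<ge> \<delta> * t * m}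
           \<le> 4 * exp (- (real n - 1) * a)"
proof -
  interpret prob_space M using ctmc_prob_space[OF c] .
  define b where "b = t / real n"
  have b0: "0 < b" using t n by (simp add: b_def)
  have lb': "real l * T1 \<le> b" using lb by (simp add: b_def)
  define f where "f x = exp (\<mu> * (h x - m))" for x
  have f0: "\<And>y. 0 \<le> f y" by (simp add: f_def)
  have fF: "\<And>y. f y \<le> 5/4"
  proof -
    fix y
    have "f y \<le> exp (1/5)" unfolding f_def using bdmu[of y] by simp
    then show "f y \<le> 5/4" using exp_fifth by linarith
  qed
  define \<rho> where "\<rho> = 1 + 49/40 * a"
  have rho0: "0 \<le> \<rho>" using a0 by (simp add: \<rho>_def)
  have step: "(\<Sum>y\<in>UNIV. heat L b x y * f y) \<le> \<rho>"
    if s': "0 \<le> s'" and p: "measure M {\<omega>\<in>space M. X s' \<omega> = x} > 0" for s' x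
    using step_bound[where f=f and F="5/4", OF c inv T1 l lb' s' p f0 fF] rho by (simp add: f_def \<rho>_def)
  define Bd where "Bd = 4 * exp (- (real n - 1) * a)"
  have expS: "(\<integral>\<omega>. exp (\<mu> * ((\<Sum>j<n. h (X (s + real j * b) \<omega>)) - real n * (1 + \<delta>) * m)) \<partial>M) \<le> Bd"
    if s0: "0 \<le> s" for s
  proof -
    define G where "G = (\<lambda>j. s + real j * b) ` {..<n}"
    have inj: "inj_on (\<lambda>j. s + real j * b) {..<n}" using b0 by (auto simp: inj_on_def)
    have G0: "\<forall>u\<in>G. 0 \<le> u" using s0 b0 by (auto simp: G_def)
    have finG: "finite G" by (simp add: G_def)
    have pw: "exp (\<mu> * ((\<Sum>j<n. h (X (s + real j * b) \<omega>)) - real n * (1 + \<delta>) * m))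
        = exp (- (12/5) * a * real n) * (\<Prod>u\<in>G. f (X u \<omega>))" for \<omega>
    proof -
      have s1: "(\<Sum>j<n. \<mu> * (h (X (s + real j * b) \<omega>) - m)) = \<mu> * (\<Sum>j<n. h (X (s + real j * b) \<omega>)) - real n * (\<mu> * m)"
        by (simp add: right_diff_distrib sum_subtractf sum_distrib_left)
      have "\<mu> * ((\<Sum>j<n. h (X (s + real j * b) \<omega>)) - real n * (1 + \<delta>) * m)
          = (\<Sum>j<n. \<mu> * (h (X (s + real j * b) \<omega>) - m)) + (- (12/5) * a * real n)"
        unfolding s1 using mud by (simp add: algebra_simps)
      then have "exp (\<mu> * ((\<Sum>j<n. h (X (s + real j * b) \<omega>)) - real n * (1 + \<delta>) * m))
          = exp (\<Sum>j<n. \<mu> * (h (X (s + real j * b) \<omega>) - m)) * exp (- (12/5) * a * real n)"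
        by (simp only: exp_add)
      also have "exp (\<Sum>j<n. \<mu> * (h (X (s + real j * b) \<omega>) - m)) = (\<Prod>j<n. f (X (s + real j * b) \<omega>))"
        by (simp only: exp_sum[OF finite_lessThan] f_def)
      also have "(\<Prod>j<n. f (X (s + real j * b) \<omega>)) = (\<Prod>u\<in>G. f (X u \<omega>))"
        unfolding G_def by (simp add: prod.reindex[OF inj])
      finally show ?thesis by simp
    qed
    have "(\<integral>\<omega>. exp (\<mu> * ((\<Sum>j<n. h (X (s + real j * b) \<omega>)) - real n * (1 + \<delta>) * m)) \<partial>M)
        = exp (- (12/5) * a * real n) * (\<integral>\<omega>. (\<Prod>u\<in>G. f (X u \<omega>)) \<partial>M)"
      by (simp only: pw integral_mult_right_zero)
    also have "(\<integral>\<omega>. (\<Prod>u\<in>G. f (X u \<omega>)) \<partial>M) = (\<Sum>z\<in>PiE G (\<lambda>_. UNIV). pth M X G z * (\<Prod>u\<in>G. f (z u)))"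
      by (rule path_expect[OF c finG G0])
    also have "\<dots> \<le> 5/4 * \<rho> ^ (n - 1)"
      unfolding G_def by (rule skeleton_bound[OF c s0 b0 f0 fF rho0 step n])
    finally have "(\<integral>\<omega>. exp (\<mu> * ((\<Sum>j<n. h (X (s + real j * b) \<omega>)) - real n * (1 + \<delta>) * m)) \<partial>M)
        \<le> exp (- (12/5) * a * real n) * (5/4 * \<rho> ^ (n - 1))" by simp
    also have "\<dots> \<le> Bd" unfolding Bd_def \<rho>_def by (rule final_arith[OF a0 n])
    finally show ?thesis .
  qed
  define N where "N K = n * (K + 1)" for K
  have Npos: "\<And>K. 0 < N K" using n by (simp add: N_def)
  have Nlim: "filterlim N at_top sequentially"
    unfolding filterlim_at_top
  proof
    fix Z :: nat
    show "\<forall>\<^sub>F K in sequentially. Z \<le> N K"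
    proof (rule eventually_sequentiallyI[of Z])
      fix K assume "Z \<le> K"
      then show "Z \<le> N K" using n unfolding N_def
        by (metis Suc_eq_plus1 le_SucI mult_le_mono1 mult.left_neutral order_trans)
    qed
  qed
  define R where "R K \<omega> = (\<Sum>i<N K. t / real (N K) * h (X (t / real (N K) * (real i + 1)) \<omega>))" for K \<omega>
  define Y where "Y \<omega> = integral {0..t} (\<lambda>s. h (X s \<omega>))" for \<omega>
  have Rconv: "(\<lambda>K. R K \<omega>) \<longlonglongrightarrow> Y \<omega>" if \<omega>: "\<omega> \<in> space M" for \<omega>
  proof -
    have rc: "\<exists>\<epsilon>>0. \<forall>u. s \<le> u \<and> u < s + \<epsilon> \<longrightarrow> h (X u \<omega>) = h (X s \<omega>)" if "0 \<le> s" for s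
      using ctmc_rc[OF c \<omega> that] by metis
    show ?thesis unfolding R_def Y_def
      by (rule riemann_conv(2)[OF t rc H Nlim Npos])
  qed
  have Rmeas: "R K \<in> borel_measurable M" for K
    unfolding R_def
    by (intro borel_measurable_sum borel_measurable_times borel_measurable_const h_X_meas[OF c])
       (use t in simp)
  have Ymeas: "Y \<in> borel_measurable M"
    by (rule borel_measurable_LIMSEQ_real[OF Rconv Rmeas])
  have Rbd: "R K \<omega> \<le> t * H" for K \<omega>
  proof -
    have "R K \<omega> \<le> (\<Sum>i<N K. t / real (N K) * H)"
      unfolding R_def using t H by (intro sum_mono mult_left_mono) (auto simp: abs_le_iff)
    also have "\<dots> = t * H" using Npos[of K] by simp
    finally show ?thesis .
  qed
  define \<mu>' where "\<mu>' = \<mu> / b"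
  have mu'0: "0 < \<mu>'" using mu b0 by (simp add: \<mu>'_def)
  define c0 where "c0 = (1 + \<delta>) * t * m"
  define S where "S K i \<omega> = (\<Sum>j<n. h (X (b / real (K+1) * (real i + 1) + real j * b) \<omega>))" for K i \<omega>
  have tnb: "t = real n * b" using n by (simp add: b_def)
  have regroup: "R K \<omega> = b / real (K+1) * (\<Sum>i<K+1. S K i \<omega>)" for K \<omega>
  proof -
    have tN: "t / real (n * (K + 1)) = b / real (K+1)" using n by (simp add: b_def field_simps)
    have pt: "t / real (n * (K + 1)) * (real (j * (K+1) + i) + 1) = b / real (K+1) * (real i + 1) + real j * b" for i j
      unfolding tN by (simp add: field_simps)
    have "R K \<omega> = (\<Sum>j<n. \<Sum>i<K+1. t / real (n * (K + 1)) * h (X (t / real (n * (K + 1)) * (real (j * (K+1) + i) + 1)) \<omega>))"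
      unfolding R_def N_def
      by (rule sum_regroup[where g="\<lambda>i. t / real (n * (K + 1)) * h (X (t / real (n * (K + 1)) * (real i + 1)) \<omega>)"])
    also have "\<dots> = (\<Sum>j<n. \<Sum>i<K+1. b / real (K+1) * h (X (b / real (K+1) * (real i + 1) + real j * b) \<omega>))"
      by (simp only: pt, simp only: tN)
    also have "\<dots> = (\<Sum>i<K+1. \<Sum>j<n. b / real (K+1) * h (X (b / real (K+1) * (real i + 1) + real j * b) \<omega>))"
      by (rule sum.swap)
    also have "\<dots> = b / real (K+1) * (\<Sum>i<K+1. S K i \<omega>)"
      unfolding S_def by (simp only: sum_distrib_left)
    finally show ?thesis .
  qed
  have Sbd: "S K i \<omega> \<le> real n * H" for K i \<omega>
  proof -
    have "S K i \<omega> \<le> (\<Sum>j<n. H)" unfolding S_def using H by (intro sum_mono) (auto simp: abs_le_iff)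
    then show ?thesis by simp
  qed
  have Smeas: "S K i \<in> borel_measurable M" for K i
    unfolding S_def
    by (intro borel_measurable_sum h_X_meas[OF c]) (use b0 in simp)
  have convex: "exp (\<mu>' * (R K \<omega> - c0))
      \<le> (\<Sum>i<K+1. (1 / real (K+1)) * exp (\<mu> * (S K i \<omega> - real n * (1 + \<delta>) * m)))" for K \<omega>
  proof -
    have e1: "(\<Sum>i<K+1. (1 / real (K+1)) *\<^sub>R (\<mu> * (S K i \<omega> - real n * (1 + \<delta>) * m)))
        = \<mu> / real (K+1) * (\<Sum>i<K+1. S K i \<omega>) - \<mu> * (real n * (1 + \<delta>) * m)"
    proof -
      have "(\<Sum>i<K+1. (1 / real (K+1)) *\<^sub>R (\<mu> * (S K i \<omega> - real n * (1 + \<delta>) * m)))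
          = (\<Sum>i<K+1. \<mu> / real (K+1) * S K i \<omega> - \<mu> / real (K+1) * (real n * (1 + \<delta>) * m))"
      proof (intro sum.cong refl)
        fix i
        have "\<And>q A C. (1 / q) *\<^sub>R (\<mu> * (A - C)) = \<mu> / q * A - \<mu> / q * C"
          by (simp add: right_diff_distrib diff_divide_distrib)
        then show "(1 / real (K+1)) *\<^sub>R (\<mu> * (S K i \<omega> - real n * (1 + \<delta>) * m))
          = \<mu> / real (K+1) * S K i \<omega> - \<mu> / real (K+1) * (real n * (1 + \<delta>) * m)" .
      qed
      also have "\<dots> = \<mu> / real (K+1) * (\<Sum>i<K+1. S K i \<omega>) - real (K+1) * (\<mu> / real (K+1) * (real n * (1 + \<delta>) * m))"
        by (simp only: sum_subtractf sum_distrib_left sum_constant card_lessThan)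
      also have "real (K+1) * (\<mu> / real (K+1) * (real n * (1 + \<delta>) * m)) = \<mu> * (real n * (1 + \<delta>) * m)"
        by simp
      finally show ?thesis .
    qed
    have e2: "\<mu>' * (R K \<omega> - c0) = \<mu> / real (K+1) * (\<Sum>i<K+1. S K i \<omega>) - \<mu> * (real n * (1 + \<delta>) * m)"
    proof -
      have gen: "\<mu> / b * (b / q * A - (1 + \<delta>) * (real n * b) * m) = \<mu> / q * A - \<mu> * (real n * (1 + \<delta>) * m)"
        for q A using b0 by (simp add: field_simps)
      show ?thesis unfolding regroup \<mu>'_def c0_def tnb by (rule gen)
    qed
    have "exp (\<Sum>i<K+1. (1 / real (K+1)) *\<^sub>R (\<mu> * (S K i \<omega> - real n * (1 + \<delta>) * m)))
        \<le> (\<Sum>i<K+1. (1 / real (K+1)) * exp (\<mu> * (S K i \<omega> - real n * (1 + \<delta>) * m)))"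
      by (rule convex_on_sum[OF _ _ exp_convex]) auto
    then show ?thesis unfolding e1 e2[symmetric] .
  qed
  note Smeas[measurable] Rmeas[measurable] Ymeas[measurable]
  have intS: "integrable M (\<lambda>\<omega>. exp (\<mu> * (S K i \<omega> - real n * (1 + \<delta>) * m)))" for K i
  proof (rule integrable_const_bound[where B="exp (\<mu> * (real n * H - real n * (1 + \<delta>) * m))"])
    show "AE \<omega> in M. norm (exp (\<mu> * (S K i \<omega> - real n * (1 + \<delta>) * m))) \<le> exp (\<mu> * (real n * H - real n * (1 + \<delta>) * m))"
      using Sbd mu by (intro AE_I2) (simp add: mult_left_mono)
  qed measurable
  have intZ: "integrable M (\<lambda>\<omega>. exp (\<mu>' * (R K \<omega> - c0)))" for K
  proof (rule integrable_const_bound[where B="exp (\<mu>' * (t * H - c0))"])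
    show "AE \<omega> in M. norm (exp (\<mu>' * (R K \<omega> - c0))) \<le> exp (\<mu>' * (t * H - c0))"
      using Rbd mu'0 by (intro AE_I2) (simp add: mult_left_mono)
  qed measurable
  have intBd: "(\<integral>\<omega>. exp (\<mu>' * (R K \<omega> - c0)) \<partial>M) \<le> Bd" for K
  proof -
    have "(\<integral>\<omega>. exp (\<mu>' * (R K \<omega> - c0)) \<partial>M)
        \<le> (\<integral>\<omega>. (\<Sum>i<K+1. (1 / real (K+1)) * exp (\<mu> * (S K i \<omega> - real n * (1 + \<delta>) * m))) \<partial>M)"
      by (rule Bochner_Integration.integral_mono[OF intZ _ convex])
         (intro Bochner_Integration.integrable_sum integrable_mult_right intS)
    also have "\<dots> = (\<Sum>i<K+1. (\<integral>\<omega>. (1 / real (K+1)) * exp (\<mu> * (S K i \<omega> - real n * (1 + \<delta>) * m)) \<partial>M))"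
      by (rule Bochner_Integration.integral_sum) (intro integrable_mult_right intS)
    also have "\<dots> = (\<Sum>i<K+1. (1 / real (K+1)) * (\<integral>\<omega>. exp (\<mu> * (S K i \<omega> - real n * (1 + \<delta>) * m)) \<partial>M))"
      by simp
    also have "\<dots> \<le> (\<Sum>i<K+1. (1 / real (K+1)) * Bd)"
    proof (intro sum_mono mult_left_mono)
      fix i
      have "0 \<le> b / real (K+1) * (real i + 1)" using b0 by simp
      then show "(\<integral>\<omega>. exp (\<mu> * (S K i \<omega> - real n * (1 + \<delta>) * m)) \<partial>M) \<le> Bd"
        unfolding S_def by (rule expS)
    qed simp
    also have "\<dots> = Bd" by simp
    finally show ?thesis .
  qed
  define Zl where "Zl \<omega> = exp (\<mu>' * (Y \<omega> - c0))" for \<omega>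
  have Zlmeas: "Zl \<in> borel_measurable M" unfolding Zl_def by measurable
  have Zmeas: "(\<lambda>\<omega>. exp (\<mu>' * (R K \<omega> - c0))) \<in> borel_measurable M" for K by measurable
  have wint: "integrable M (\<lambda>_. exp (\<mu>' * (t * H - c0)))" by simp
  have AEc: "AE \<omega> in M. (\<lambda>K. exp (\<mu>' * (R K \<omega> - c0))) \<longlonglongrightarrow> Zl \<omega>"
    unfolding Zl_def by (intro AE_I2 tendsto_intros Rconv)
  have AEb: "AE \<omega> in M. norm (exp (\<mu>' * (R K \<omega> - c0))) \<le> exp (\<mu>' * (t * H - c0))" for K
    using Rbd mu'0 by (intro AE_I2) (simp add: mult_left_mono)
  have lim: "(\<lambda>K. \<integral>\<omega>. exp (\<mu>' * (R K \<omega> - c0)) \<partial>M) \<longlonglongrightarrow> (\<integral>\<omega>. Zl \<omega> \<partial>M)"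
    by (rule integral_dominated_convergence[OF Zlmeas Zmeas wint AEc AEb])
  have intZl: "integrable M Zl"
    by (rule integrable_dominated_convergence[OF Zlmeas Zmeas wint AEc AEb])
  have ZlBd: "(\<integral>\<omega>. Zl \<omega> \<partial>M) \<le> Bd"
    by (rule LIMSEQ_le_const2[OF lim]) (use intBd in auto)
  define E where "E = {\<omega>\<in>space M. integral {0..t} (\<lambda>s. h (X s \<omega>)) - t * m \<ge> \<delta> * t * m}"
  have E': "E = {\<omega>\<in>space M. \<delta> * t * m \<le> Y \<omega> - t * m}" by (simp add: E_def Y_def)
  have Esets: "E \<in> sets M" unfolding E' by measurable
  have "measure M E = (\<integral>\<omega>. indicator E \<omega> \<partial>M)"
    using Esets by (simp add: Int_absorb2 sets.sets_into_space)
  also have "\<dots> \<le> (\<integral>\<omega>. Zl \<omega> \<partial>M)"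
  proof (rule Bochner_Integration.integral_mono)
    show "integrable M (indicator E :: 'w \<Rightarrow> real)"
      using Esets by (intro integrable_real_indicator) (auto simp: emeasure_eq_measure)
    show "integrable M Zl" by (rule intZl)
    fix \<omega> assume "\<omega> \<in> space M"
    show "indicator E \<omega> \<le> Zl \<omega>"
    proof (cases "\<omega> \<in> E")
      case True
      then have "0 \<le> Y \<omega> - c0" unfolding E' c0_def by (simp add: algebra_simps)
      then have "0 \<le> \<mu>' * (Y \<omega> - c0)" using mu'0 by simp
      then show ?thesis using True by (simp add: Zl_def)
    next
      case False then show ?thesis by (simp add: Zl_def)
    qed
  qed
  also have "\<dots> \<le> Bd" by (rule ZlBd)
  finally show ?thesis unfolding E_def Bd_def .
qed



theorem mainTheorem19:
  fixes M :: "'w measure" and X :: "real \<Rightarrow> 'w \<Rightarrow> 'a::finite"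
    and L :: "'a \<Rightarrow> 'a \<Rightarrow> real" and \<pi> h :: "'a \<Rightarrow> real"
    and \<sigma> t \<delta> :: real
  assumes ctmc: "is_ctmc M X L"
    and inv: "is_invariant L \<pi>"
    and pos: "\<forall>x. 0 < \<pi> x"
    and mixes: "mixing_set L \<pi> \<noteq> {}"
    and var: "pi_var \<pi> h \<le> \<sigma>^2"
    and mean_pos: "pi_mean \<pi> h > 0"
    and t_pos: "t > 0"
    and delta_pos: "0 < \<delta>"
    and delta_le: "\<delta> \<le> min (\<sigma>^2 / (2 * pi_mean \<pi> h * sup_norm h)) 1"
  shows "measure M {\<omega>\<in>space M.
            integral {0..t} (\<lambda>s. h (X s \<omega>)) - t * pi_mean \<pi> h \<ge> \<delta> * t * pi_mean \<pi> h}
         \<le> 4 * exp (- real_of_int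
              \<lfloor>t / ((- log 2 (\<delta>^2 * (pi_mean \<pi> h)^2 * pi_min \<pi> / (6 * \<sigma>^2))) * mixing_time L \<pi>) - 1\<rfloor>
              * (\<delta>^2 * (pi_mean \<pi> h)^2 / (6 * \<sigma>^2)))"
proof -
  interpret prob_space M using ctmc_prob_space[OF ctmc] .
  define m where "m = pi_mean \<pi> h"
  define H where "H = sup_norm h"
  define T where "T = mixing_time L \<pi>"
  define ps where "ps = pi_min \<pi>"
  define a where "a = \<delta>^2 * m^2 / (6 * \<sigma>^2)"
  define k where "k = - log 2 (\<delta>^2 * m^2 * ps / (6 * \<sigma>^2))"
  define F where "F = \<lfloor>t / (k * T) - 1\<rfloor>"
  have goal_eq: "4 * exp (- real_of_int
              \<lfloor>t / ((- log 2 (\<delta>^2 * (pi_mean \<pi> h)^2 * pi_min \<pi> / (6 * \<sigma>^2))) * mixing_time L \<pi>) - 1\<rfloor>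
              * (\<delta>^2 * (pi_mean \<pi> h)^2 / (6 * \<sigma>^2))) = 4 * exp (- real_of_int F * a)"
    by (simp add: F_def k_def T_def a_def m_def ps_def)
  define E where "E = {\<omega>\<in>space M. integral {0..t} (\<lambda>s. h (X s \<omega>)) - t * m \<ge> \<delta> * t * m}"
  have dist: "is_distribution \<pi>" using inv by (simp add: is_invariant_def)
  have p0: "\<And>x. 0 \<le> \<pi> x" and p1: "(\<Sum>x\<in>UNIV. \<pi> x) = 1" using dist by (auto simp: is_distribution_def)
  have m0: "0 < m" using mean_pos by (simp add: m_def)
  have Hge: "\<bar>h x\<bar> \<le> H" for x unfolding H_def sup_norm_def by (rule Max_ge) auto
  have mH: "m \<le> H"
  proof -
    have "m \<le> (\<Sum>x\<in>UNIV. \<pi> x * H)" unfolding m_def pi_mean_def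
      by (intro sum_mono mult_left_mono p0) (use Hge in \<open>auto simp: abs_le_iff\<close>)
    also have "\<dots> = H" using p1 by (simp add: sum_distrib_right[symmetric])
    finally show ?thesis .
  qed
  have H0: "0 < H" using m0 mH by linarith
  have d1: "\<delta> \<le> \<sigma>^2 / (2 * m * H)" and d2: "\<delta> \<le> 1" using delta_le by (auto simp: m_def H_def)
  have s0: "0 < \<sigma>^2"
  proof -
    have "0 < \<sigma>^2 / (2 * m * H)" using delta_pos d1 by linarith
    then show ?thesis using m0 H0 by (simp add: zero_less_divide_iff)
  qed
  have dmH: "\<delta> * m * H \<le> \<sigma>^2 / 2"
  proof -
    have "\<delta> * (2 * m * H) \<le> \<sigma>^2 / (2 * m * H) * (2 * m * H)"
      using d1 m0 H0 by (intro mult_right_mono) auto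
    then show ?thesis using m0 H0 by (simp add: field_simps)
  qed
  have a0: "0 < a" unfolding a_def using delta_pos m0 s0 by simp
  have a_le: "a \<le> 1/12"
  proof -
    have dm1: "\<delta> * m \<le> \<sigma>^2 / (2 * H)" using dmH H0 by (simp add: field_simps)
    have "\<delta> * m \<le> 1 * m" using d2 m0 by (intro mult_right_mono) auto
    then have dm2: "\<delta> * m \<le> H" using mH by simp
    have "\<delta>^2 * m^2 = (\<delta> * m) * (\<delta> * m)" by (simp add: power2_eq_square)
    also have "\<dots> \<le> \<sigma>^2 / (2 * H) * H"
      using dm1 dm2 delta_pos m0 s0 H0 by (intro mult_mono) auto
    also have "\<dots> = \<sigma>^2 / 2" using H0 by simp
    finally show ?thesis unfolding a_def using s0 by (simp add: field_simps)
  qed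
  show ?thesis
  proof (cases "F \<le> 0")
    case True
    have "0 \<le> - real_of_int F * a" using True a0 by (simp add: mult_nonpos_nonneg)
    then have "1 \<le> exp (- real_of_int F * a)" by simp
    moreover have "measure M {\<omega>\<in>space M.
            integral {0..t} (\<lambda>s. h (X s \<omega>)) - t * pi_mean \<pi> h \<ge> \<delta> * t * pi_mean \<pi> h} \<le> 1"
      by (rule prob_le_1)
    ultimately show ?thesis unfolding goal_eq by linarith
  next
    case False
    then have F1: "1 \<le> F" by simp
    show ?thesis
    proof (cases "\<exists>x y::'a. x \<noteq> y")
      case False
      have one: "x = undefined" for x :: 'a
      proof (rule ccontr)
        assume "x \<noteq> undefined"
        then show False using False by blast
      qed
      have hm: "m = h undefined"
      proof -
        have "m = (\<Sum>x\<in>UNIV. \<pi> x * h undefined)" unfolding m_def pi_mean_def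
        proof (intro sum.cong refl)
          fix x
          show "\<pi> x * h x = \<pi> x * h undefined" by (subst one[of x]) (rule refl)
        qed
        also have "\<dots> = h undefined" using p1 by (simp add: sum_distrib_right[symmetric])
        finally show ?thesis .
      qed
      have e: "{\<omega>\<in>space M. integral {0..t} (\<lambda>s. h (X s \<omega>)) - t * pi_mean \<pi> h \<ge> \<delta> * t * pi_mean \<pi> h} = {}"
      proof -
        have "integral {0..t} (\<lambda>s. h (X s \<omega>)) = t * m" for \<omega>
        proof -
          have "(\<lambda>s. h (X s \<omega>)) = (\<lambda>s. m)"
          proof (rule ext)
            fix s
            show "h (X s \<omega>) = m" unfolding hm by (subst one[of "X s \<omega>"]) (rule refl)
          qed
          then show ?thesis using t_pos by (simp add: content_real)
        qed
        moreover have "0 < \<delta> * t * m" using delta_pos t_pos m0 by simp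
        ultimately show ?thesis unfolding m_def by auto
      qed
      show ?thesis unfolding e goal_eq by simp
    next
      case True
      then obtain x0 y0 :: 'a where xy: "x0 \<noteq> y0" by blast
      have ps_le: "ps \<le> 1/2"
      proof -
        have "ps \<le> \<pi> x0" unfolding ps_def pi_min_def by (rule Min_le) auto
        moreover have "ps \<le> \<pi> y0" unfolding ps_def pi_min_def by (rule Min_le) auto
        moreover have "\<pi> x0 + \<pi> y0 \<le> 1"
        proof -
          have "(\<Sum>x\<in>{x0, y0}. \<pi> x) \<le> (\<Sum>x\<in>UNIV. \<pi> x)"
            by (rule sum_mono2) (auto simp: p0)
          then show ?thesis using xy p1 by simp
        qed
        ultimately show ?thesis by linarith
      qed
      have ps0: "0 < ps"
      proof -
        have "ps \<in> range \<pi>" unfolding ps_def pi_min_def by (rule Min_in) auto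
        then show ?thesis using pos by auto
      qed
      define q where "q = a * ps"
      have q0: "0 < q" using a0 ps0 by (simp add: q_def)
      have q_le: "q < 1/2"
      proof -
        have "q \<le> 1/12 * 1" unfolding q_def using a_le ps_le a0 ps0 by (intro mult_mono) auto
        then show ?thesis by simp
      qed
      have kq: "k = - log 2 q" unfolding k_def q_def a_def by (simp add: field_simps)
      have pk: "2 powr (- k) = q" unfolding kq using q0 by simp
      have k1: "1 < k"
      proof -
        have h2: "2 powr (- 1::real) = 1/2" by (simp add: powr_minus)
        have "2 powr (- k) < 2 powr (- 1::real)" using pk q_le h2 by simp
        then have "- k < - 1" using powr_less_cancel_iff[of 2 "- k" "- 1"] by simp
        then show ?thesis by simp
      qed
      define l where "l = nat \<lceil>k\<rceil> - 1"
      have c2: "2 \<le> \<lceil>k\<rceil>"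
      proof -
        have "k \<le> real_of_int \<lceil>k\<rceil>" by (rule le_of_int_ceiling)
        then have "1 < \<lceil>k\<rceil>" using k1 by linarith
        then show ?thesis by simp
      qed
      have "nat 2 \<le> nat \<lceil>k\<rceil>" using c2 by (rule nat_mono)
      then have n1c: "1 \<le> nat \<lceil>k\<rceil>" by simp
      have l_real: "real l = real_of_int \<lceil>k\<rceil> - 1"
      proof -
        have "real l = real (nat \<lceil>k\<rceil>) - 1" unfolding l_def using n1c by (simp add: of_nat_diff)
        also have "real (nat \<lceil>k\<rceil>) = real_of_int \<lceil>k\<rceil>" using c2 by simp
        finally show ?thesis .
      qed
      have l1: "1 \<le> l" using k1 unfolding l_def by linarith
      have lk: "real l < k" using l_real by linarith
      have lk2: "k \<le> real l + 1" using l_real by linarith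
      have half: "(1/2) ^ (l + 1) \<le> q"
      proof -
        have "2 powr (- real (l + 1)) = inverse (2 powr real (l + 1))" by (rule powr_minus)
        also have "2 powr real (l + 1) = (2::real) ^ (l + 1)" by (rule powr_realpow) simp
        also have "inverse ((2::real) ^ (l + 1)) = (1/2) ^ (l + 1)" by (simp add: power_one_over inverse_eq_divide)
        finally have "(1/2::real) ^ (l + 1) = 2 powr (- real (l + 1))" by simp
        also have "\<dots> \<le> 2 powr (- k)" using lk2 by (intro powr_mono) auto
        finally show ?thesis using pk by simp
      qed
      have Ff: "F = \<lfloor>t / (k * T)\<rfloor> - 1" unfolding F_def by simp
      have fl2: "2 \<le> \<lfloor>t / (k * T)\<rfloor>" using F1 Ff by simp
      have tkT2: "2 \<le> t / (k * T)"
      proof -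
        have "real_of_int \<lfloor>t / (k * T)\<rfloor> \<le> t / (k * T)" by (rule of_int_floor_le)
        moreover have "(2::real) \<le> real_of_int \<lfloor>t / (k * T)\<rfloor>" using fl2 by simp
        ultimately show ?thesis by linarith
      qed
      have kT0: "0 < k * T"
      proof (rule ccontr)
        assume "\<not> 0 < k * T"
        then have "t / (k * T) \<le> 0" using t_pos by (simp add: divide_nonneg_nonpos)
        then show False using tkT2 by linarith
      qed
      have T0: "0 < T" using kT0 k1 by (simp add: zero_less_mult_iff)
      define n where "n = nat \<lfloor>t / (k * T)\<rfloor>"
      have n_real: "real n = real_of_int \<lfloor>t / (k * T)\<rfloor>" unfolding n_def using fl2 by simp
      have n1: "1 \<le> n" unfolding n_def using fl2 by linarith
      have Fn: "real_of_int F = real n - 1" using Ff n_real by simp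
      have kTn: "k * T \<le> t / real n"
      proof -
        have "real n \<le> t / (k * T)" using n_real by (simp add: of_int_floor_le)
        then have "real n * (k * T) \<le> t" using kT0 by (simp add: field_simps)
        then show ?thesis using n1 by (simp add: field_simps)
      qed
      have "Inf (mixing_set L \<pi>) < k * T / real l"
      proof -
        have "real l * T < k * T" using lk T0 by (intro mult_strict_right_mono) auto
        then have "T < k * T / real l" using l1 by (simp add: field_simps)
        then show ?thesis by (simp add: T_def mixing_time_def)
      qed
      then obtain T1 where T1: "T1 \<in> mixing_set L \<pi>" and T1lt: "T1 < k * T / real l"
        using cInf_lessD[OF mixes] by blast
      have lb: "real l * T1 \<le> t / real n"
      proof -
        have "real l * T1 < k * T" using T1lt l1 by (simp add: field_simps)
        then show ?thesis using kTn by linarith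
      qed
      define \<mu> where "\<mu> = 2/5 * \<delta> * m / \<sigma>^2"
      have mu0: "0 < \<mu>" unfolding \<mu>_def using delta_pos m0 s0 by simp
      have muH: "\<mu> * H \<le> 1/5"
      proof -
        have "\<mu> * H = 2/5 * (\<delta> * m * H) / \<sigma>^2" by (simp add: \<mu>_def)
        also have "\<dots> \<le> 2/5 * (\<sigma>^2 / 2) / \<sigma>^2" using dmH s0 by (intro divide_right_mono mult_left_mono) auto
        also have "\<dots> = 1/5" using s0 by simp
        finally show ?thesis .
      qed
      have bdmu: "\<mu> * (h x - m) \<le> 1/5" for x
      proof -
        have "\<mu> * (h x - m) \<le> \<mu> * H" using Hge[of x] m0 mu0 by (intro mult_left_mono) (auto simp: abs_le_iff)
        then show ?thesis using muH by linarith
      qed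
      have mu2: "\<mu>^2 * \<sigma>^2 = 24/25 * a"
        unfolding \<mu>_def a_def using s0 by (simp add: field_simps power2_eq_square)
      have mud: "\<mu> * \<delta> * m = 12/5 * a"
        unfolding \<mu>_def a_def using s0 by (simp add: field_simps power2_eq_square)
      have mgf: "(\<Sum>y\<in>UNIV. \<pi> y * exp (\<mu> * (h y - m))) \<le> 1 + \<mu>^2 * \<sigma>^2 / 2 * exp (1/5)"
        using pi_mgf[OF dist var, of "1/5" \<mu>] bdmu unfolding m_def by simp
      have rho: "(\<Sum>y\<in>UNIV. \<pi> y * exp (\<mu> * (h y - m))) + (1/2)^(l+1) * (5/4) \<le> 1 + 49/40 * a"
      proof -
        have "\<mu>^2 * \<sigma>^2 / 2 * exp (1/5) \<le> \<mu>^2 * \<sigma>^2 / 2 * (5/4)"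
          using exp_fifth by (intro mult_left_mono) auto
        also have "\<dots> = 3/5 * a" using mu2 by simp
        finally have A: "(\<Sum>y\<in>UNIV. \<pi> y * exp (\<mu> * (h y - m))) \<le> 1 + 3/5 * a" using mgf by linarith
        have "(1/2)^(l+1) * (5/4::real) \<le> q * (5/4)" using half by simp
        also have "q * (5/4) \<le> 5/8 * a"
        proof -
          have "q \<le> a * (1/2)" unfolding q_def using ps_le a0 by (intro mult_left_mono) auto
          then show ?thesis by simp
        qed
        finally show ?thesis using A by simp
      qed
      have main: "measure M {\<omega>\<in>space M. integral {0..t} (\<lambda>s. h (X s \<omega>)) - t * m \<ge> \<delta> * t * m}
           \<le> 4 * exp (- (real n - 1) * a)"
        by (rule core_bound[OF ctmc inv T1 l1 n1 t_pos lb mu0 m_def bdmu Hge _ rho mud]) (use a0 in simp)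
      show ?thesis unfolding goal_eq Fn using main by (simp add: m_def)
    qed
  qed
qed


end
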